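(* Let $|\psi\rangle$ be a pure three-qubit state. Suppose that the inequality $\mathcal C_{ik}^2+\mathcal C_{jk}^2\ge\frac89$ holds for at least two of the three choices of $\{i,j,k\}=\{A,B,C\}$ (i.e. for at least two choices of the index $k$). Then steering correlations obey monogamy: at most one of $S_{AB},S_{AC},S_{BC}$ exceeds $1$.
   Context: For a two-qubit state $\rho$ let $t_{kl}=\mathrm{Tr}[\rho\,\sigma_k\otimes\sigma_l]$ ($\sigma_k$ Pauli matrices) and $S(\rho)=\sum_{k,l=1}^3 t_{kl}^2$; $\rho_{ij}$ is the reduced state of qubits $i,j$ and $S_{ij}=S(\rho_{ij})$. $S_{ij}>1$ is equivalent to $\rho_{ij}$ violating the three-settings CJWR linear steering inequality. $\mathcal C_{ij}$ is the Wootters concurrence of $\rho_{ij}$: $\mathcal C(\rho)=\max\{0,\lambda_1-\lambda_2-\lambda_3-\lambda_4\}$, with $\lambda_1\ge\dots\ge\lambda_4$ the square roots of the eigenvalues of $\rho(\sigma_2\otimes\sigma_2)\rho^*(\sigma_2\otimes\sigma_2)$. Monogamy of steering means that at most one of the three reduced states violates the inequality. *)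

theory Defs
  imports "Jordan_Normal_Form.Char_Poly" "HOL-Computational_Algebra.Polynomial"
begin

(* Three-qubit pure state: vector psi of dimension 8, basis index 4*a + 2*b + c
   for qubits A (bit a), B (bit b), C (bit c). *)

definition pure3 :: "complex vec \<Rightarrow> bool" where
  "pure3 psi \<longleftrightarrow> dim_vec psi = 8 \<and> (\<Sum>i<8. (cmod (psi $ i))^2) = 1"

(* reduced two-qubit density matrices, basis index 2*x + y *)
definition rho_AB :: "complex vec \<Rightarrow> complex mat" where
  "rho_AB psi = mat 4 4 (\<lambda>(i,j). \<Sum>c<2. psi $ (2*i + c) * cnj (psi $ (2*j + c)))"

definition rho_AC :: "complex vec \<Rightarrow> complex mat" where
  "rho_AC psi = mat 4 4 (\<lambda>(i,j). \<Sum>b<2.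
      psi $ (4*(i div 2) + 2*b + i mod 2) * cnj (psi $ (4*(j div 2) + 2*b + j mod 2)))"

definition rho_BC :: "complex vec \<Rightarrow> complex mat" where
  "rho_BC psi = mat 4 4 (\<lambda>(i,j). \<Sum>a<2. psi $ (4*a + i) * cnj (psi $ (4*a + j)))"

definition pauli :: "nat \<Rightarrow> complex mat" where
  "pauli k = (if k = 1 then mat_of_rows_list 2 [[0, 1], [1, 0]]
              else if k = 2 then mat_of_rows_list 2 [[0, -\<i>], [\<i>, 0]]
              else mat_of_rows_list 2 [[1, 0], [0, -1]])"

definition kron2 :: "complex mat \<Rightarrow> complex mat \<Rightarrow> complex mat" where
  "kron2 A B = mat 4 4 (\<lambda>(i,j). A $$ (i div 2, j div 2) * B $$ (i mod 2, j mod 2))"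

(* t_kl = Tr[rho sigma_k (x) sigma_l]; real for Hermitian rho, Re taken to land in reals *)
definition tcorr :: "complex mat \<Rightarrow> nat \<Rightarrow> nat \<Rightarrow> real" where
  "tcorr rho k l = Re (\<Sum>i<4. (rho * kron2 (pauli k) (pauli l)) $$ (i, i))"

definition Ssteer :: "complex mat \<Rightarrow> real" where
  "Ssteer rho = (\<Sum>k\<in>{1..3}. \<Sum>l\<in>{1..3}. (tcorr rho k l)^2)"

(* Wootters concurrence. R = rho (sy(x)sy) rho^* (sy(x)sy) has real nonnegative eigenvalues;
   mu is the list of them (with multiplicity) in non-increasing order, lambda_i = sqrt mu_i. *)
definition wootters_R :: "complex mat \<Rightarrow> complex mat" where
  "wootters_R rho = (let Y = kron2 (pauli 2) (pauli 2) in rho * Y * map_mat cnj rho * Y)"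

definition wootters_eigs :: "complex mat \<Rightarrow> real list" where
  "wootters_eigs rho = (SOME mu. length mu = 4 \<and> sorted_wrt (\<ge>) mu \<and>
      char_poly (wootters_R rho) = (\<Prod>x\<leftarrow>mu. [:- complex_of_real x, 1:]))"

definition concurrence :: "complex mat \<Rightarrow> real" where
  "concurrence rho = (let lam = map sqrt (wootters_eigs rho) in
      max 0 (lam!0 - lam!1 - lam!2 - lam!3))"

end

theory Submission
  imports Defs
begin


lemma const_poly_semiring_hom: "semiring_hom (\<lambda>a::'a::comm_semiring_1. [:a:])"
  by (unfold_locales) (auto simp: one_pCons, metis mult.commute)

lemma char_poly_comm:
  fixes P Q :: "'a :: idom mat"
  assumes P: "P \<in> carrier_mat n n" and Q: "Q \<in> carrier_mat n n"
  shows "char_poly (P * Q) = char_poly (Q * P)"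
proof -
  let ?h = "\<lambda>a::'a. [:a:]"
  let ?P = "map_mat ?h P"
  let ?Q = "map_mat ?h Q"
  let ?XI = "([:0,1:] :: 'a poly) \<cdot>\<^sub>m 1\<^sub>m n"
  let ?I = "1\<^sub>m n :: 'a poly mat"
  let ?O = "0\<^sub>m n n :: 'a poly mat"
  have cP: "?P \<in> carrier_mat n n" and cQ: "?Q \<in> carrier_mat n n" using P Q by auto
  have cX: "?XI \<in> carrier_mat n n" by auto
  have hPQ: "map_mat ?h (P * Q) = ?P * ?Q"
    using semiring_hom.mat_hom_mult[OF const_poly_semiring_hom P Q] .
  have hQP: "map_mat ?h (Q * P) = ?Q * ?P"
    using semiring_hom.mat_hom_mult[OF const_poly_semiring_hom Q P] .
  have cpm1: "char_poly_matrix (P * Q) = ?XI * ?I - ?P * ?Q"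
  proof -
    have "char_poly_matrix (P * Q) = ?XI + map_mat (\<lambda>a. [:-a:]) (P * Q)"
      unfolding char_poly_matrix_def using P by simp
    also have "map_mat (\<lambda>a. [:-a:]) (P * Q) = - map_mat ?h (P * Q)"
      by (rule eq_matI) auto
    finally show ?thesis unfolding hPQ using cX cP cQ minus_add_uminus_mat[of "?XI" n n "?P * ?Q"]
      by simp
  qed
  have cpm2: "char_poly_matrix (Q * P) = ?I * ?XI - ?Q * ?P"
  proof -
    have "char_poly_matrix (Q * P) = ?XI + map_mat (\<lambda>a. [:-a:]) (Q * P)"
      unfolding char_poly_matrix_def using Q by simp
    also have "map_mat (\<lambda>a. [:-a:]) (Q * P) = - map_mat ?h (Q * P)"
      by (rule eq_matI) auto
    finally show ?thesis unfolding hQP using cX cP cQ minus_add_uminus_mat[of "?XI" n n "?Q * ?P"]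
      by simp
  qed
  let ?M1 = "four_block_mat ?XI ?P ?Q ?I"
  let ?M2 = "four_block_mat ?I ?Q ?P ?XI"
  let ?Pi = "four_block_mat ?O ?I ?I ?O"
  have d1: "det ?M1 = det (?XI * ?I - ?P * ?Q)"
    by (rule det_four_block_mat[OF cX cP cQ]) (use cQ in auto)
  have comm: "?P * ?XI = ?XI * ?P"
  proof -
    have "?P * ?XI = [:0,1:] \<cdot>\<^sub>m (?P * ?I)" by (rule mult_smult_distrib[OF cP]) auto
    also have "\<dots> = [:0,1:] \<cdot>\<^sub>m (?I * ?P)" using cP by simp
    also have "\<dots> = ?XI * ?P" by (rule mult_smult_assoc_mat[symmetric]) (use cP in auto)
    finally show ?thesis .
  qed
  have d2: "det ?M2 = det (?I * ?XI - ?Q * ?P)"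
    by (rule det_four_block_mat[OF _ cQ cP cX]) (use comm in auto)
  have cPi: "?Pi \<in> carrier_mat (n+n) (n+n)" by auto
  have cM1: "?M1 \<in> carrier_mat (n+n) (n+n)" using cP cQ by auto
  have cO: "?O \<in> carrier_mat n n" and cI: "?I \<in> carrier_mat n n" by auto
  have "?Pi * ?M1 = four_block_mat ?Q ?I ?XI ?P"
    by (subst mult_four_block_mat[OF cO cI cI cO cX cP cQ cI]) (use cP cQ cX in simp)
  also have "\<dots> * ?Pi = ?M2"
    by (subst mult_four_block_mat[OF cQ cI cX cP cO cI cI cO]) (use cP cQ cX in simp)
  finally have M2: "?M2 = ?Pi * ?M1 * ?Pi" by simp
  have PiPi: "?Pi * ?Pi = 1\<^sub>m (n+n)"
    by (subst mult_four_block_mat[OF cO cI cI cO cO cI cI cO]) (simp add: four_block_one_mat)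
  have "det ?M2 = det ?Pi * det ?M1 * det ?Pi"
    unfolding M2 using cPi cM1 by (simp add: det_mult[OF mult_carrier_mat[OF cPi cM1] cPi] det_mult[OF cPi cM1])
  also have "\<dots> = det (?Pi * ?Pi) * det ?M1"
    using cPi by (simp add: det_mult[OF cPi cPi])
  also have "\<dots> = det ?M1" unfolding PiPi by simp
  finally have "det ?M1 = det ?M2" by simp
  thus ?thesis unfolding char_poly_def cpm1 cpm2 d1 d2 by simp
qed

lemma det1: assumes B: "B \<in> carrier_mat 1 1" shows "det B = B $$ (0,0)"
proof -
  have "det B = (\<Sum>i<1. B $$ (i,0) * cofactor B i 0)" by (rule laplace_expansion_column[OF B]) simp
  also have "\<dots> = B $$ (0,0) * det (mat_delete B 0 0)" by (simp add: cofactor_def)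
  also have "det (mat_delete B 0 0) = 1" by (rule det_dim_zero) (use mat_delete_carrier[OF B] in simp)
  finally show ?thesis by simp
qed

lemma det2: assumes A: "A \<in> carrier_mat 2 2"
  shows "det A = A $$ (0,0) * A $$ (1,1) - A $$ (0,1) * A $$ (1,0)"
proof -
  have c: "mat_delete A i 0 \<in> carrier_mat 1 1" for i using mat_delete_carrier[OF A] by simp
  have "det A = (\<Sum>i<2. A $$ (i,0) * cofactor A i 0)" by (rule laplace_expansion_column[OF A]) simp
  also have "\<dots> = A $$ (0,0) * det (mat_delete A 0 0) - A $$ (1,0) * det (mat_delete A 1 0)"
    by (simp add: cofactor_def eval_nat_numeral)
  also have "det (mat_delete A 0 0) = A $$ (1,1)" by (subst det1[OF c]) (use A in \<open>simp add: mat_delete_def\<close>)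
  also have "det (mat_delete A 1 0) = A $$ (0,1)" by (subst det1[OF c]) (use A in \<open>simp add: mat_delete_def\<close>)
  finally show ?thesis by (simp add: algebra_simps)
qed

lemma char_poly2: assumes B: "B \<in> carrier_mat 2 2"
  shows "char_poly B = [: B $$ (0,0) * B $$ (1,1) - B $$ (0,1) * B $$ (1,0), - (B $$ (0,0) + B $$ (1,1)), 1 :]"
  unfolding char_poly_def
  apply (subst det2)
  using B apply (simp add: char_poly_matrix_def)
  using B apply (simp add: char_poly_matrix_def)
  done

lemma char_poly_block: fixes B :: "'a::idom mat"
  assumes B: "B \<in> carrier_mat 2 2"
  shows "char_poly (four_block_mat B (0\<^sub>m 2 2) (0\<^sub>m 2 2) (0\<^sub>m 2 2)) = char_poly B * [:0,0,1:]"
proof -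
  have "char_poly_matrix (four_block_mat B (0\<^sub>m 2 2) (0\<^sub>m 2 2) (0\<^sub>m 2 2))
     = four_block_mat (char_poly_matrix B) (0\<^sub>m 2 2) (0\<^sub>m 2 2) ([:0,1:] \<cdot>\<^sub>m 1\<^sub>m 2)"
    by (rule eq_matI) (use B in \<open>auto simp: char_poly_matrix_def four_block_mat_def\<close>)
  moreover have "det (four_block_mat (char_poly_matrix B) (0\<^sub>m 2 2) (0\<^sub>m 2 2) ([:0,1:] \<cdot>\<^sub>m 1\<^sub>m 2))
     = det (char_poly_matrix B) * det ([:0,1:] \<cdot>\<^sub>m (1\<^sub>m 2 :: 'a poly mat))"
    by (rule det_four_block_mat_lower_left_zero) (use B in auto)
  moreover have "det ([:0,1:] \<cdot>\<^sub>m (1\<^sub>m 2 :: 'a poly mat)) = [:0,0,1:]"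
    by (simp add: power2_eq_square)
  ultimately show ?thesis unfolding char_poly_def by simp
qed

lemma list4: "length xs = 4 \<Longrightarrow> \<exists>a b c d. xs = [a,b,c,d]"
  by (auto simp: length_Suc_conv eval_nat_numeral)

lemma lin_mul2: "[:a,1:] * [:b,1:] = [:a*b, a+b, 1:]" for a b :: "'a::comm_ring_1"
  by (simp add: algebra_simps)
lemma lin_mul3: "[:a,1:] * [:b,c,1:] = [:a*b, b + a*c, c + a, 1:]" for a b c :: "'a::comm_ring_1"
  by (simp add: algebra_simps)
lemma lin_mul4: "[:a,1:] * [:b,c,e,1:] = [:a*b, b + a*c, c + a*e, e + a, 1:]" for a b c e :: "'a::comm_ring_1"
  by (simp add: algebra_simps)

lemma eigs_analysis:
  fixes m0 m1 m2 m3 t d :: real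
  assumes prod: "(\<Prod>x\<leftarrow>[m0,m1,m2,m3]. [:- complex_of_real x, 1:]) = [:0, 0, complex_of_real d, - complex_of_real t, 1:]"
    and sorted: "sorted_wrt (\<ge>) [m0,m1,m2,m3]"
    and t: "t \<ge> 0" and d: "d \<ge> 0"
  shows "m2 = 0 \<and> m3 = 0 \<and> m1 \<ge> 0 \<and> m0 + m1 = t \<and> m0 * m1 = d"
proof -
  have root: "m^2 * (m^2 - t * m + d) = 0" if "m \<in> {m0,m1,m2,m3}" for m
  proof -
    have pe: "poly (\<Prod>x\<leftarrow>[m0,m1,m2,m3]. [:- complex_of_real x, 1:]) z
       = (z - m0) * ((z - m1) * ((z - m2) * (z - m3)))" for z
      by (simp only: list.map prod_list.Cons prod_list.Nil mult_1_right poly_mult poly_pCons poly_0) (simp add: algebra_simps)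
    have "poly (\<Prod>x\<leftarrow>[m0,m1,m2,m3]. [:- complex_of_real x, 1:]) (complex_of_real m) = 0"
      unfolding pe using that by auto
    hence "poly [:0, 0, complex_of_real d, - complex_of_real t, 1:] (complex_of_real m) = 0"
      unfolding prod .
    hence "complex_of_real (m^2 * (m^2 - t * m + d)) = 0"
      by (simp add: algebra_simps power2_eq_square)
    thus ?thesis by (simp only: of_real_eq_0_iff)
  qed
  have nonneg: "m \<ge> 0" if "m \<in> {m0,m1,m2,m3}" for m
  proof (rule ccontr)
    assume "\<not> m \<ge> 0"
    hence m: "m < 0" by simp
    have "m^2 > 0" using m by simp
    moreover have "m^2 - t * m + d > 0"
    proof -
      have "t * m \<le> 0" using mult_nonneg_nonpos[OF t] m by simp
      thus ?thesis using \<open>m^2 > 0\<close> d by linarith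
    qed
    ultimately have "m^2 * (m^2 - t * m + d) > 0" by simp
    with root[OF that] show False by linarith
  qed
  define a where "a = - complex_of_real m0"
  define b where "b = - complex_of_real m1"
  define c where "c = - complex_of_real m2"
  define e where "e = - complex_of_real m3"
  have "[:a,1:] * ([:b,1:] * ([:c,1:] * [:e,1:])) = [:0, 0, complex_of_real d, - complex_of_real t, 1:]"
    using prod unfolding a_def b_def c_def e_def by (simp only: list.map prod_list.Cons prod_list.Nil mult_1_right)
  hence H: "a*(b*(c*e)) = 0 \<and> b*(c*e) + a*(c*e + b*(c+e)) = 0 \<and>
      (c*e + b*(c+e)) + a*((c+e)+b) = complex_of_real d \<and> ((c+e)+b) + a = - complex_of_real t"
    by (simp only: lin_mul2 lin_mul3 lin_mul4 pCons_eq_iff simp_thms(6) simp_thms(21) pCons_0_0)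
  have "complex_of_real (m0*m1*m2*m3) = 0" using H unfolding a_def b_def c_def e_def
    by (elim conjE) (simp only: of_real_mult of_real_add, Groebner_Basis.algebra)
  hence e4: "m0*m1*m2*m3 = 0" by (simp only: of_real_eq_0_iff)
  have "complex_of_real (m0*m1*m2 + m0*m1*m3 + m0*m2*m3 + m1*m2*m3) = 0" using H unfolding a_def b_def c_def e_def
    by (elim conjE) (simp only: of_real_mult of_real_add, Groebner_Basis.algebra)
  hence e3: "m0*m1*m2 + m0*m1*m3 + m0*m2*m3 + m1*m2*m3 = 0" by (simp only: of_real_eq_0_iff)
  have "complex_of_real (m0*m1 + m0*m2 + m0*m3 + m1*m2 + m1*m3 + m2*m3) = complex_of_real d" using H unfolding a_def b_def c_def e_def
    by (elim conjE) (simp only: of_real_mult of_real_add, Groebner_Basis.algebra)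
  hence e2: "m0*m1 + m0*m2 + m0*m3 + m1*m2 + m1*m3 + m2*m3 = d" by (simp only: of_real_eq_iff)
  have "complex_of_real (m0+m1+m2+m3) = complex_of_real t" using H unfolding a_def b_def c_def e_def
    by (elim conjE) (simp only: of_real_mult of_real_add, Groebner_Basis.algebra)
  hence e1: "m0+m1+m2+m3 = t" by (simp only: of_real_eq_iff)
  have s: "m0 \<ge> m1" "m1 \<ge> m2" "m2 \<ge> m3" using sorted by auto
  have n: "m0 \<ge> 0" "m1 \<ge> 0" "m2 \<ge> 0" "m3 \<ge> 0" using nonneg by auto
  have "m0*m1*m2 = 0"
  proof -
    have "m0*m1*m3 \<ge> 0" "m0*m2*m3 \<ge> 0" "m1*m2*m3 \<ge> 0" "m0*m1*m2 \<ge> 0" using n by auto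
    thus ?thesis using e3 by linarith
  qed
  hence m2: "m2 = 0"
  proof -
    assume "m0*m1*m2 = 0"
    show "m2 = 0"
    proof (rule ccontr)
      assume "m2 \<noteq> 0"
      hence "m2 > 0" using n by simp
      hence "m0 > 0" "m1 > 0" using s by auto
      hence "m0*m1*m2 > 0" using \<open>m2 > 0\<close> by simp
      thus False using \<open>m0*m1*m2 = 0\<close> by simp
    qed
  qed
  have m3: "m3 = 0" using m2 s n by simp
  show ?thesis using e1 e2 m2 m3 n by simp
qed


definition bil :: "(nat \<Rightarrow> complex) \<Rightarrow> (nat \<Rightarrow> complex) \<Rightarrow> complex" where
  "bil a b = - a 0 * b 3 + a 1 * b 2 + a 2 * b 1 - a 3 * b 0"
definition TT :: "(nat \<Rightarrow> complex) \<Rightarrow> (nat \<Rightarrow> complex) \<Rightarrow> real" where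
  "TT a b = (cmod (bil a a))^2 + 2 * (cmod (bil a b))^2 + (cmod (bil b b))^2"
definition DD :: "(nat \<Rightarrow> complex) \<Rightarrow> (nat \<Rightarrow> complex) \<Rightarrow> real" where
  "DD a b = cmod (bil a a * bil b b - (bil a b)^2)"

definition rho2 :: "(nat \<Rightarrow> complex) \<Rightarrow> (nat \<Rightarrow> complex) \<Rightarrow> complex mat" where
  "rho2 a b = mat 4 4 (\<lambda>(i,j). a i * cnj (a j) + b i * cnj (b j))"
definition "Pm a b = mat 4 4 (\<lambda>(i,j). if j = 0 then a i else if j = 1 then b i else (0::complex))"
definition "Pa a b = mat 4 4 (\<lambda>(i,j). if i = 0 then cnj (a j) else if i = 1 then cnj (b j) else (0::complex))"
definition "Pc a b = mat 4 4 (\<lambda>(i,j). if j = 0 then cnj (a i) else if j = 1 then cnj (b i) else (0::complex))"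
definition "PT a b = mat 4 4 (\<lambda>(i,j). if i = 0 then a j else if i = 1 then b j else (0::complex))"
definition wW :: "(nat \<Rightarrow> complex) \<Rightarrow> (nat \<Rightarrow> complex) \<Rightarrow> nat \<Rightarrow> nat \<Rightarrow> complex" where "wW a b i j = (if i = 0 \<and> j = 0 then bil a a else if i = 1 \<and> j = 1 then bil b b else bil a b)"
definition "Wm a b = mat 4 4 (\<lambda>(i,j). if i < 2 \<and> j < 2 then wW a b i j else 0)"
definition "Wc a b = mat 4 4 (\<lambda>(i,j). if i < 2 \<and> j < 2 then cnj (wW a b i j) else 0)"
definition "Bm a b = mat 2 2 (\<lambda>(i,j). \<Sum>k<2. cnj (wW a b i k) * wW a b k j)"
definition "Ym = mat 4 4 (\<lambda>(i,j). if i = 0 \<and> j = 3 then -1 else if i = 1 \<and> j = 2 then 1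
    else if i = 2 \<and> j = 1 then 1 else if i = 3 \<and> j = 0 then -1 else (0::complex))"

lemma less4: "(i::nat) < 4 \<longleftrightarrow> i = 0 \<or> i = 1 \<or> i = 2 \<or> i = 3" by auto
lemma less2: "(i::nat) < 2 \<longleftrightarrow> i = 0 \<or> i = 1" by auto
lemma sum4': "(\<Sum>i\<in>{0..<(4::nat)}. f i) = f 0 + f 1 + f 2 + (f 3::'a::comm_monoid_add)"
  by (simp add: eval_nat_numeral add.commute add.left_commute atLeast0LessThan)
lemma sum4: "(\<Sum>i<(4::nat). f i) = f 0 + f 1 + f 2 + (f 3::'a::comm_monoid_add)"
  by (simp add: eval_nat_numeral add.commute add.left_commute)
lemma sum2: "(\<Sum>i<(2::nat). f i) = f 0 + (f 1::'a::comm_monoid_add)"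
  by (simp add: eval_nat_numeral add.commute)

lemma pauli_ent:
  "pauli 1 $$ (0,0) = 0" "pauli 1 $$ (0,Suc 0) = 1" "pauli 1 $$ (Suc 0,0) = 1" "pauli 1 $$ (Suc 0,Suc 0) = 0"
  "pauli 2 $$ (0,0) = 0" "pauli 2 $$ (0,Suc 0) = -\<i>" "pauli 2 $$ (Suc 0,0) = \<i>" "pauli 2 $$ (Suc 0,Suc 0) = 0"
  "pauli 3 $$ (0,0) = 1" "pauli 3 $$ (0,Suc 0) = 0" "pauli 3 $$ (Suc 0,0) = 0" "pauli 3 $$ (Suc 0,Suc 0) = -1"
  by (simp_all add: pauli_def mat_of_rows_list_def)
lemma pauli_ent1:
  "pauli (Suc 0) $$ (0,0) = 0" "pauli (Suc 0) $$ (0,Suc 0) = 1" "pauli (Suc 0) $$ (Suc 0,0) = 1" "pauli (Suc 0) $$ (Suc 0,Suc 0) = 0"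
  by (simp_all add: pauli_def mat_of_rows_list_def)

lemma Ym_eq: "kron2 (pauli 2) (pauli 2) = Ym"
  by (rule eq_matI) (auto simp: kron2_def Ym_def less4 pauli_ent)

lemma c4[simp]: "rho2 a b \<in> carrier_mat 4 4" "Pm a b \<in> carrier_mat 4 4" "Pa a b \<in> carrier_mat 4 4"
  "Pc a b \<in> carrier_mat 4 4" "PT a b \<in> carrier_mat 4 4" "Wm a b \<in> carrier_mat 4 4" "Wc a b \<in> carrier_mat 4 4"
  "Ym \<in> carrier_mat 4 4" "Bm a b \<in> carrier_mat 2 2"
  by (auto simp: rho2_def Pm_def Pa_def Pc_def PT_def Wm_def Wc_def Ym_def Bm_def)

lemma F1: "rho2 a b = Pm a b * Pa a b"
  by (rule eq_matI) (auto simp: rho2_def Pm_def Pa_def scalar_prod_def sum4')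
lemma F2: "map_mat cnj (rho2 a b) = Pc a b * PT a b"
  by (rule eq_matI) (auto simp: rho2_def Pc_def PT_def scalar_prod_def sum4')
lemma F3: "PT a b * Ym * Pm a b = Wm a b"
  by (rule eq_matI) (auto simp: PT_def Ym_def Pm_def Wm_def wW_def bil_def scalar_prod_def sum4' less4 algebra_simps)
lemma F4: "Pa a b * Ym * Pc a b = Wc a b"
  by (rule eq_matI) (auto simp: Pa_def Ym_def Pc_def Wc_def wW_def bil_def scalar_prod_def sum4' less4 algebra_simps)
lemma F5: "Wc a b * Wm a b = four_block_mat (Bm a b) (0\<^sub>m 2 2) (0\<^sub>m 2 2) (0\<^sub>m 2 2)"
  by (rule eq_matI) (auto simp: Wc_def Wm_def Bm_def four_block_mat_def scalar_prod_def sum4' sum2 less4)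

lemma assoc4: "A \<in> carrier_mat 4 4 \<Longrightarrow> B \<in> carrier_mat 4 4 \<Longrightarrow> C \<in> carrier_mat 4 4 \<Longrightarrow> A * B * C = A * (B * C)"
  for A B C :: "complex mat" by simp
lemma mult4: "A \<in> carrier_mat 4 4 \<Longrightarrow> B \<in> carrier_mat 4 4 \<Longrightarrow> A * B \<in> carrier_mat 4 4"
  for A B :: "complex mat" by simp

lemma charR: "char_poly (wootters_R (rho2 a b)) = [:0, 0, complex_of_real ((DD a b)^2), - complex_of_real (TT a b), 1:]"
proof -
  let ?P = "Pm a b" and ?A = "Pa a b" and ?C = "Pc a b" and ?T = "PT a b"
  let ?Q = "?A * Ym * (?C * ?T) * Ym"
  have cQ: "?Q \<in> carrier_mat 4 4" by (simp only: mult4 c4)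
  have R: "wootters_R (rho2 a b) = ?P * ?Q"
    unfolding wootters_R_def Let_def Ym_eq F2 unfolding F1 by (simp only: assoc4 mult4 c4)
  have "char_poly (wootters_R (rho2 a b)) = char_poly (?Q * ?P)"
    unfolding R by (rule char_poly_comm[OF c4(2) cQ])
  also have "?Q * ?P = Wc a b * Wm a b"
    unfolding F3[symmetric] F4[symmetric] by (simp only: assoc4 mult4 c4)
  also have "\<dots> = four_block_mat (Bm a b) (0\<^sub>m 2 2) (0\<^sub>m 2 2) (0\<^sub>m 2 2)" by (rule F5)
  also have "char_poly \<dots> = char_poly (Bm a b) * [:0,0,1:]" by (rule char_poly_block) simp
  also have "char_poly (Bm a b) = [: complex_of_real ((DD a b)^2), - complex_of_real (TT a b), 1 :]"
  proof -
    have d: "Bm a b $$ (0,0) * Bm a b $$ (1,1) - Bm a b $$ (0,1) * Bm a b $$ (1,0) = complex_of_real ((DD a b)^2)"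
      unfolding DD_def complex_norm_square
      by (simp add: Bm_def sum2 wW_def; Groebner_Basis.algebra)
    have t: "Bm a b $$ (0,0) + Bm a b $$ (1,1) = complex_of_real (TT a b)"
      unfolding TT_def of_real_add of_real_mult complex_norm_square
      by (simp add: Bm_def sum2 wW_def; Groebner_Basis.algebra)
    show ?thesis using d t by (subst char_poly2) simp_all
  qed
  finally show ?thesis by simp
qed

lemma TT_ge: "2 * DD a b \<le> TT a b"
proof -
  let ?x = "cmod (bil a a)" and ?y = "cmod (bil a b)" and ?z = "cmod (bil b b)"
  have "DD a b \<le> cmod (bil a a * bil b b) + cmod ((bil a b)^2)"
    unfolding DD_def by (rule norm_triangle_ineq4)
  also have "\<dots> = ?x * ?z + ?y^2" by (simp add: norm_mult norm_power)
  finally have "DD a b \<le> ?x * ?z + ?y^2" .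
  moreover have "2 * (?x * ?z) \<le> ?x^2 + ?z^2" using sum_squares_bound[of ?x ?z] by simp
  ultimately show ?thesis unfolding TT_def by linarith
qed

lemma DD_ge0: "DD a b \<ge> 0" by (simp add: DD_def)
lemma TT_ge0: "TT a b \<ge> 0" using TT_ge[of a b] DD_ge0[of a b] by linarith

lemma conc_rho2: "(concurrence (rho2 a b))^2 = TT a b - 2 * DD a b"
proof -
  let ?t = "TT a b" and ?dd = "DD a b"
  define s where "s = sqrt (?t^2 - 4 * ?dd^2)"
  define r1 where "r1 = (?t + s) / 2"
  define r2 where "r2 = (?t - s) / 2"
  have t0: "?t \<ge> 0" by (rule TT_ge0)
  have dd0: "?dd \<ge> 0" by (rule DD_ge0)
  have tdd: "2 * ?dd \<le> ?t" by (rule TT_ge)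
  have disc: "?t^2 - 4 * ?dd^2 \<ge> 0"
  proof -
    have "(2 * ?dd)^2 \<le> ?t^2" using tdd dd0 by (intro power_mono) auto
    moreover have "(2 * ?dd)^2 = 4 * ?dd^2" by (simp add: power_mult_distrib)
    ultimately show ?thesis by linarith
  qed
  have s0: "s \<ge> 0" unfolding s_def using disc by simp
  have s2: "s^2 = ?t^2 - 4 * ?dd^2" unfolding s_def using disc by simp
  have st: "s \<le> ?t"
  proof -
    have "s^2 \<le> ?t^2" using s2 dd0 by simp
    thus ?thesis using s0 t0 by (simp add: power_mono_iff)
  qed
  have r12: "r1 * r2 = ?dd^2" unfolding r1_def r2_def using s2 by (simp add: field_simps power2_eq_square)
  have r1p2: "r1 + r2 = ?t" unfolding r1_def r2_def by (simp add: field_simps)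
  have sorted: "sorted_wrt (\<ge>) [r1, r2, 0, 0]"
    using s0 st unfolding r1_def r2_def by auto
  have prodeq: "(\<Prod>x\<leftarrow>[r1, r2, 0, 0]. [:- complex_of_real x, 1:]) =
       [:0, 0, complex_of_real (?dd^2), - complex_of_real ?t, 1:]"
  proof -
    have "(\<Prod>x\<leftarrow>[r1, r2, 0, 0]. [:- complex_of_real x, 1:]) =
       [:- complex_of_real r1, 1:] * ([:- complex_of_real r2, 1:] * ([:0, 1:] * [:0, 1:]))"
      by simp
    also have "\<dots> = [:0, 0, complex_of_real (r1 * r2), - complex_of_real (r1 + r2), 1:]"
      by (simp only: lin_mul2 lin_mul3 lin_mul4) (simp add: algebra_simps)
    finally show ?thesis using r12 r1p2 by simp
  qed
  have ex: "\<exists>mu. length mu = 4 \<and> sorted_wrt (\<ge>) mu \<and>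
      char_poly (wootters_R (rho2 a b)) = (\<Prod>x\<leftarrow>mu. [:- complex_of_real x, 1:])"
    by (rule exI[of _ "[r1, r2, 0, 0]"]) (use sorted prodeq charR in simp)
  let ?mu = "wootters_eigs (rho2 a b)"
  have spec: "length ?mu = 4 \<and> sorted_wrt (\<ge>) ?mu \<and>
      char_poly (wootters_R (rho2 a b)) = (\<Prod>x\<leftarrow>?mu. [:- complex_of_real x, 1:])"
    unfolding wootters_eigs_def by (rule someI_ex[OF ex])
  then obtain m0 m1 m2 m3 where mu: "?mu = [m0, m1, m2, m3]" using list4 by blast
  have srt: "sorted_wrt (\<ge>) [m0, m1, m2, m3]" using spec mu by simp
  have pr: "(\<Prod>x\<leftarrow>[m0, m1, m2, m3]. [:- complex_of_real x, 1:]) =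
      [:0, 0, complex_of_real (?dd^2), - complex_of_real ?t, 1:]"
  proof -
    have pr0: "char_poly (wootters_R (rho2 a b)) = (\<Prod>x\<leftarrow>[m0, m1, m2, m3]. [:- complex_of_real x, 1:])"
      using spec unfolding mu by blast
    show ?thesis using pr0 unfolding charR by (rule sym)
  qed
  have A: "m2 = 0 \<and> m3 = 0 \<and> m1 \<ge> 0 \<and> m0 + m1 = ?t \<and> m0 * m1 = ?dd^2"
    by (rule eigs_analysis[OF pr srt t0]) simp
  have m01: "m0 \<ge> m1" using srt by simp
  have sq: "sqrt m1 \<le> sqrt m0" using m01 by simp
  have c: "concurrence (rho2 a b) = sqrt m0 - sqrt m1"
    unfolding concurrence_def Let_def mu using A sq by simp
  have m0: "m0 \<ge> 0" using A m01 by linarith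
  have "(concurrence (rho2 a b))^2 = (sqrt m0)^2 + (sqrt m1)^2 - 2 * (sqrt m0 * sqrt m1)"
    unfolding c by (simp only: power2_diff mult.assoc)
  also have "\<dots> = ?t - 2 * ?dd"
  proof -
    have "sqrt m0 * sqrt m1 = sqrt (m0 * m1)" by (simp add: real_sqrt_mult)
    also have "\<dots> = ?dd" using A dd0 by simp
    finally show ?thesis using A m0 by simp
  qed
  finally show ?thesis .
qed


definition nrm :: "(nat \<Rightarrow> complex) \<Rightarrow> real" where "nrm X = (\<Sum>i<4. (cmod (X i))^2)"
definition ipr :: "(nat \<Rightarrow> complex) \<Rightarrow> (nat \<Rightarrow> complex) \<Rightarrow> complex" where
  "ipr U V = (\<Sum>i<4. cnj (U i) * V i)"
definition mmax :: "(nat \<Rightarrow> complex) \<Rightarrow> (nat \<Rightarrow> complex) \<Rightarrow> real" where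
  "mmax U V = (nrm U + nrm V + sqrt ((nrm U - nrm V)^2 + 4 * (cmod (ipr U V))^2)) / 2"

lemma tri4: "cmod (- p + q + r - s) \<le> cmod p + cmod q + cmod r + cmod s"
proof -
  have "cmod (- p + q + r - s) \<le> cmod (- p + q + r) + cmod s" by (rule norm_triangle_ineq4)
  moreover have "cmod (- p + q + r) \<le> cmod (- p + q) + cmod r" by (rule norm_triangle_ineq)
  moreover have "cmod (- p + q) \<le> cmod (- p) + cmod q" by (rule norm_triangle_ineq)
  ultimately show ?thesis by simp
qed

lemma CS4: fixes a0 a1 a2 a3 b0 b1 b2 b3 :: real
  shows "(a0*b3 + a1*b2 + a2*b1 + a3*b0)^2 \<le> (a0^2+a1^2+a2^2+a3^2) * (b0^2+b1^2+b2^2+b3^2)"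
proof -
  have "(a0^2+a1^2+a2^2+a3^2) * (b0^2+b1^2+b2^2+b3^2) - (a0*b3 + a1*b2 + a2*b1 + a3*b0)^2 =
    (a0*b2 - a1*b3)^2 + (a0*b1 - a2*b3)^2 + (a0*b0 - a3*b3)^2 + (a1*b1 - a2*b2)^2 + (a1*b0 - a3*b2)^2
    + (a2*b0 - a3*b1)^2"
    by Groebner_Basis.algebra
  moreover have "(a0*b2 - a1*b3)^2 + (a0*b1 - a2*b3)^2 + (a0*b0 - a3*b3)^2 + (a1*b1 - a2*b2)^2 + (a1*b0 - a3*b2)^2
    + (a2*b0 - a3*b1)^2 \<ge> 0" by simp
  ultimately show ?thesis by linarith
qed

lemma bil_CS: "(cmod (bil X Y))^2 \<le> nrm X * nrm Y"
proof -
  have "cmod (bil X Y) \<le> cmod (X 0) * cmod (Y 3) + cmod (X 1) * cmod (Y 2) + cmod (X 2) * cmod (Y 1) + cmod (X 3) * cmod (Y 0)"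
    unfolding bil_def using tri4[of "X 0 * Y 3" "X 1 * Y 2" "X 2 * Y 1" "X 3 * Y 0"] by (simp add: norm_mult)
  hence "(cmod (bil X Y))^2 \<le> (cmod (X 0) * cmod (Y 3) + cmod (X 1) * cmod (Y 2) + cmod (X 2) * cmod (Y 1) + cmod (X 3) * cmod (Y 0))^2"
    by (rule power_mono) simp
  also have "\<dots> \<le> nrm X * nrm Y" unfolding nrm_def sum4 by (rule CS4)
  finally show ?thesis .
qed

lemma bil_lin: "bil (\<lambda>i. x0 * U i + x1 * V i) (\<lambda>i. y0 * U i + y1 * V i) =
   x0 * y0 * bil U U + (x0 * y1 + x1 * y0) * bil U V + x1 * y1 * bil V V"
  unfolding bil_def by Groebner_Basis.algebra

lemma cmod_sq_c: "complex_of_real ((cmod z)^2) = z * cnj z"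
  by (rule complex_norm_square)

lemma gram_expand: "nrm (\<lambda>i. x0 * U i + x1 * V i) =
   (cmod x0)^2 * nrm U + (cmod x1)^2 * nrm V + 2 * Re (cnj x0 * x1 * ipr U V)"
proof -
  have "complex_of_real (nrm (\<lambda>i. x0 * U i + x1 * V i)) =
    complex_of_real ((cmod x0)^2 * nrm U + (cmod x1)^2 * nrm V) + (cnj x0 * x1 * ipr U V + cnj (cnj x0 * x1 * ipr U V))"
    unfolding nrm_def ipr_def sum4 of_real_add of_real_mult cmod_sq_c
    by (simp add: sum4; Groebner_Basis.algebra)
  also have "cnj x0 * x1 * ipr U V + cnj (cnj x0 * x1 * ipr U V) = complex_of_real (2 * Re (cnj x0 * x1 * ipr U V))"
    by (rule complex_add_cnj)
  finally show ?thesis by (simp only: of_real_add[symmetric] of_real_eq_iff)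
qed

lemma gram_bound: "nrm (\<lambda>i. x0 * U i + x1 * V i) \<le> mmax U V * ((cmod x0)^2 + (cmod x1)^2)"
proof -
  define nU where "nU = nrm U"
  define nV where "nV = nrm V"
  define c where "c = cmod (ipr U V)"
  define s where "s = sqrt ((nU - nV)^2 + 4 * c^2)"
  define a where "a = cmod x0"
  define b where "b = cmod x1"
  have m: "mmax U V = (nU + nV + s) / 2" unfolding mmax_def nU_def nV_def c_def s_def by simp
  have c0: "c \<ge> 0" and a0: "a \<ge> 0" and b0: "b \<ge> 0" unfolding c_def a_def b_def by auto
  have s2: "s^2 = (nU - nV)^2 + 4 * c^2" unfolding s_def by simp
  have s0: "s \<ge> 0" unfolding s_def by simp
  have sabs: "\<bar>nU - nV\<bar> \<le> s"
  proof -
    have "sqrt ((nU - nV)^2) \<le> s" unfolding s_def by (rule real_sqrt_le_mono) simp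
    thus ?thesis by simp
  qed
  define \<alpha> where "\<alpha> = (nV - nU + s) / 2"
  define \<beta> where "\<beta> = (nU - nV + s) / 2"
  have al: "\<alpha> \<ge> 0" "\<beta> \<ge> 0" unfolding \<alpha>_def \<beta>_def using sabs by auto
  have ab: "\<alpha> * \<beta> = c^2" unfolding \<alpha>_def \<beta>_def using s2 by (simp add: field_simps power2_eq_square; Groebner_Basis.algebra)
  have key: "2 * a * b * c \<le> \<alpha> * a^2 + \<beta> * b^2"
  proof -
    have "(\<alpha> * a^2 + \<beta> * b^2)^2 - (2 * a * b * c)^2 = (\<alpha> * a^2 - \<beta> * b^2)^2"
      using ab by Groebner_Basis.algebra
    hence "(2 * a * b * c)^2 \<le> (\<alpha> * a^2 + \<beta> * b^2)^2" by (smt (verit) zero_le_power2)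
    moreover have "\<alpha> * a^2 + \<beta> * b^2 \<ge> 0" using al by simp
    ultimately show ?thesis by (rule power2_le_imp_le)
  qed
  have re: "Re (cnj x0 * x1 * ipr U V) \<le> a * b * c"
  proof -
    have "Re (cnj x0 * x1 * ipr U V) \<le> cmod (cnj x0 * x1 * ipr U V)" by (rule complex_Re_le_cmod)
    also have "\<dots> = a * b * c" unfolding a_def b_def c_def by (simp add: norm_mult)
    finally show ?thesis .
  qed
  have "nrm (\<lambda>i. x0 * U i + x1 * V i) = a^2 * nU + b^2 * nV + 2 * Re (cnj x0 * x1 * ipr U V)"
    unfolding gram_expand a_def b_def nU_def nV_def ..
  also have "\<dots> \<le> a^2 * nU + b^2 * nV + (\<alpha> * a^2 + \<beta> * b^2)" using re key by linarith
  also have "\<dots> = mmax U V * (a^2 + b^2)" unfolding m \<alpha>_def \<beta>_def by (simp add: field_simps)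
  finally show ?thesis unfolding a_def b_def .
qed

lemma nrm_ge0: "nrm X \<ge> 0" unfolding nrm_def by (simp add: sum_nonneg)
lemma mmax_ge0: "mmax U V \<ge> 0"
  unfolding mmax_def using nrm_ge0[of U] nrm_ge0[of V] by simp

lemma opnorm:
  fixes y0 y1 :: complex
  shows "(cmod (bil U U * y0 + bil U V * y1))^2 + (cmod (bil U V * y0 + bil V V * y1))^2
     \<le> (mmax U V)^2 * ((cmod y0)^2 + (cmod y1)^2)"
proof -
  define z0 where "z0 = bil U U * y0 + bil U V * y1"
  define z1 where "z1 = bil U V * y0 + bil V V * y1"
  define Z where "Z = (cmod z0)^2 + (cmod z1)^2"
  define Yn where "Yn = (cmod y0)^2 + (cmod y1)^2"
  define m where "m = mmax U V"
  let ?X = "\<lambda>i. cnj z0 * U i + cnj z1 * V i"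
  let ?Y = "\<lambda>i. y0 * U i + y1 * V i"
  have Z0: "Z \<ge> 0" and Y0: "Yn \<ge> 0" unfolding Z_def Yn_def by auto
  have "bil ?X ?Y = complex_of_real Z"
    unfolding bil_lin Z_def of_real_add cmod_sq_c z0_def z1_def by (simp; Groebner_Basis.algebra)
  hence "(cmod (bil ?X ?Y))^2 = Z^2" using Z0 by simp
  hence "Z^2 \<le> nrm ?X * nrm ?Y" using bil_CS[of ?X ?Y] by simp
  also have "\<dots> \<le> (m * Z) * (m * Yn)"
  proof (rule mult_mono)
    show "nrm ?X \<le> m * Z" using gram_bound[of "cnj z0" U "cnj z1" V] unfolding m_def Z_def by simp
    show "nrm ?Y \<le> m * Yn" using gram_bound[of y0 U y1 V] unfolding m_def Yn_def by simp
    show "0 \<le> m * Z" using mmax_ge0[of U V] Z0 unfolding m_def by simp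
    show "0 \<le> nrm ?Y" unfolding nrm_def by (simp add: sum_nonneg)
  qed
  finally have "Z * Z \<le> Z * (m^2 * Yn)" by (simp add: power2_eq_square algebra_simps)
  hence "Z \<le> m^2 * Yn"
  proof (cases "Z = 0")
    case True thus ?thesis using Y0 by simp
  next
    case False hence "Z > 0" using Z0 by simp
    thus ?thesis using \<open>Z * Z \<le> Z * (m^2 * Yn)\<close> by simp
  qed
  thus ?thesis unfolding Z_def Yn_def z0_def z1_def m_def .
qed

lemma quad_id:
  fixes w0 w1 w2 y0 y1 :: complex
  shows "(cmod (w0 * y0 + w1 * y1))^2 + (cmod (w1 * y0 + w2 * y1))^2 =
    ((cmod w0)^2 + (cmod w1)^2) * (cmod y0)^2 + ((cmod w1)^2 + (cmod w2)^2) * (cmod y1)^2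
    + 2 * Re (cnj y0 * (cnj w0 * w1 + cnj w1 * w2) * y1)"
proof -
  let ?w = "cnj y0 * (cnj w0 * w1 + cnj w1 * w2) * y1"
  have "complex_of_real ((cmod (w0 * y0 + w1 * y1))^2 + (cmod (w1 * y0 + w2 * y1))^2) =
    complex_of_real (((cmod w0)^2 + (cmod w1)^2) * (cmod y0)^2 + ((cmod w1)^2 + (cmod w2)^2) * (cmod y1)^2)
    + (?w + cnj ?w)"
    unfolding of_real_add of_real_mult cmod_sq_c by (simp; Groebner_Basis.algebra)
  also have "?w + cnj ?w = complex_of_real (2 * Re ?w)" by (rule complex_add_cnj)
  finally show ?thesis by (simp only: of_real_add[symmetric] of_real_eq_iff)
qed

lemma det_id:
  fixes w0 w1 w2 :: complex
  shows "((cmod w0)^2 + (cmod w1)^2) * ((cmod w1)^2 + (cmod w2)^2) - (cmod (cnj w0 * w1 + cnj w1 * w2))^2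
     = (cmod (w0 * w2 - w1^2))^2"
proof -
  have "complex_of_real (((cmod w0)^2 + (cmod w1)^2) * ((cmod w1)^2 + (cmod w2)^2) - (cmod (cnj w0 * w1 + cnj w1 * w2))^2)
     = complex_of_real ((cmod (w0 * w2 - w1^2))^2)"
    unfolding of_real_add of_real_mult of_real_diff cmod_sq_c by (simp; Groebner_Basis.algebra)
  thus ?thesis by (simp only: of_real_eq_iff)
qed

lemma main_ineq: "TT U V - 2 * DD U V \<le> (mmax U V)^2"
proof -
  define w0 where "w0 = bil U U"
  define w1 where "w1 = bil U V"
  define w2 where "w2 = bil V V"
  define M where "M = (mmax U V)^2"
  define G00 where "G00 = (cmod w0)^2 + (cmod w1)^2"
  define G11 where "G11 = (cmod w1)^2 + (cmod w2)^2"
  define G01 where "G01 = cnj w0 * w1 + cnj w1 * w2"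
  define g where "g = (cmod G01)^2"
  define D where "D = DD U V"
  define T where "T = TT U V"
  have T: "T = G00 + G11" unfolding T_def TT_def G00_def G11_def w0_def w1_def w2_def by simp
  have D: "D^2 = G00 * G11 - g" unfolding D_def DD_def G00_def G11_def g_def G01_def
    using det_id[of w0 w1 w2] unfolding w0_def w1_def w2_def by simp
  have D0: "D \<ge> 0" unfolding D_def by (rule DD_ge0)
  have g0: "g \<ge> 0" unfolding g_def by simp
  have QF: "G00 * (cmod y0)^2 + G11 * (cmod y1)^2 + 2 * Re (cnj y0 * G01 * y1) \<le> M * ((cmod y0)^2 + (cmod y1)^2)"
    for y0 y1
    using opnorm[of U y0 V y1] quad_id[of w0 y0 w1 y1 w2] unfolding w0_def w1_def w2_def M_def G00_def G11_def G01_def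
    by simp
  define p where "p = M - G00"
  define r where "r = M - G11"
  have p0: "p \<ge> 0" using QF[of 1 0] unfolding p_def by simp
  have r0: "r \<ge> 0" using QF[of 0 1] unfolding r_def by simp
  have re1: "Re (cnj G01 * G01 * complex_of_real t) = t * g" for t
    unfolding g_def by (simp add: complex_norm_square[symmetric] mult.commute)
  have QF2: "r * t^2 - 2 * t * g + p * g \<ge> 0" for t
  proof -
    have "G00 * (cmod G01)^2 + G11 * (cmod (complex_of_real t))^2 + 2 * Re (cnj G01 * G01 * complex_of_real t)
       \<le> M * ((cmod G01)^2 + (cmod (complex_of_real t))^2)" by (rule QF)
    hence "G00 * g + G11 * t^2 + 2 * (t * g) \<le> M * (g + t^2)" unfolding re1 g_def by simp
    thus ?thesis unfolding p_def r_def by (simp add: algebra_simps)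
  qed
  have pr: "g \<le> p * r"
  proof (cases "p > 0")
    case True
    have "r * p^2 - 2 * p * g + p * g \<ge> 0" using QF2[of p] .
    hence "p * (p * r - g) \<ge> 0" by (simp add: algebra_simps power2_eq_square)
    thus ?thesis using True by (simp add: zero_le_mult_iff)
  next
    case False
    hence p: "p = 0" using p0 by simp
    show ?thesis
    proof (rule ccontr)
      assume "\<not> g \<le> p * r"
      hence gpos: "g > 0" using p by simp
      define t where "t = g / (r + 1)"
      have t0: "t > 0" unfolding t_def using gpos r0 by simp
      have "r * t < g" unfolding t_def using gpos r0 by (simp add: field_simps)
      hence "r * t^2 < 2 * t * g" using t0 gpos by (simp add: power2_eq_square)
      thus False using QF2[of t] p by simp
    qed
  qed
  have f: "M^2 - M * T + D^2 \<ge> 0"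
  proof -
    have "p * r - g = M^2 - M * T + D^2" unfolding p_def r_def T D by (simp add: algebra_simps power2_eq_square)
    thus ?thesis using pr by simp
  qed
  have tr: "2 * M \<ge> T" using p0 r0 unfolding p_def r_def T by simp
  have TD: "2 * D \<le> T" unfolding D_def T_def by (rule TT_ge)
  show ?thesis
  proof (rule ccontr)
    assume "\<not> ?thesis"
    hence lt: "M < T - 2 * D" unfolding M_def T_def D_def by simp
    have T4: "T > 4 * D" using lt tr by simp
    have "(M - (T - 2 * D)) * (M - 2 * D) < 0"
    proof (rule mult_neg_pos)
      show "M - (T - 2 * D) < 0" using lt by simp
      show "M - 2 * D > 0" using tr T4 by simp
    qed
    moreover have "(M - (T - 2 * D)) * (M - 2 * D) = (M^2 - M * T + D^2) - D * (5 * D - 2 * T)"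
      by (simp add: algebra_simps power2_eq_square)
    moreover have "D * (5 * D - 2 * T) \<le> 0" using D0 T4 by (simp add: mult_nonneg_nonpos)
    ultimately show False using f by simp
  qed
qed


definition "xr psi i = Re (psi $ i)"
definition "yr psi i = Im (psi $ i)"
definition "vAB0 psi = (\<lambda>i. psi $ (2*i))"
definition "vAB1 psi = (\<lambda>i. psi $ (2*i+1))"
definition "vAC0 psi = (\<lambda>i. psi $ (4*(i div 2) + i mod 2))"
definition "vAC1 psi = (\<lambda>i. psi $ (4*(i div 2) + 2 + i mod 2))"
definition "vBC0 psi = (\<lambda>i. psi $ i)"
definition "vBC1 psi = (\<lambda>i. psi $ (4 + i))"

lemma cmod_sq: "(cmod z)^2 = (Re z)^2 + (Im z)^2" by (simp add: cmod_def)

lemma tc: "tcorr rho k l = Re (\<Sum>i<4. \<Sum>j<4. rho $$ (i,j) * kron2 (pauli k) (pauli l) $$ (j,i))"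
  if "rho \<in> carrier_mat 4 4"
  using that unfolding tcorr_def
  by (auto simp: kron2_def scalar_prod_def intro!: arg_cong[where f=Re] sum.cong)

lemma sum8: "(\<Sum>i<(8::nat). f i) = f 0 + f 1 + f 2 + f 3 + f 4 + f 5 + f 6 + (f 7::'a::comm_monoid_add)"
  by (simp add: eval_nat_numeral add.commute add.left_commute)
lemma sum13: "(\<Sum>i\<in>{1..(3::nat)}. f i) = f 1 + f 2 + (f 3::'a::comm_monoid_add)"
  by (simp add: eval_nat_numeral add.commute add.left_commute atLeastAtMostSuc_conv)

lemma rhoAB_c: "rho_AB psi \<in> carrier_mat 4 4" by (simp add: rho_AB_def)
lemma rhoAC_c: "rho_AC psi \<in> carrier_mat 4 4" by (simp add: rho_AC_def)
lemma rhoBC_c: "rho_BC psi \<in> carrier_mat 4 4" by (simp add: rho_BC_def)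

lemma t_AB_11: "tcorr (rho_AB psi) 1 1 = ((2)*xr psi 0*xr psi 6 + (2)*xr psi 1*xr psi 7 + (2)*xr psi 2*xr psi 4 + (2)*xr psi 3*xr psi 5 + (2)*yr psi 0*yr psi 6 + (2)*yr psi 1*yr psi 7 + (2)*yr psi 2*yr psi 4 + (2)*yr psi 3*yr psi 5)"
  unfolding tc[OF rhoAB_c] xr_def yr_def
  apply (simp add: sum4 rho_AB_def kron2_def pauli_ent pauli_ent1 sum2)
  apply ((simp only: One_nat_def[symmetric] Suc_1 Suc_numeral add_num_simps)?)
  apply (simp add: algebra_simps power2_eq_square)?
  done

lemma t_AB_12: "tcorr (rho_AB psi) 1 2 = ((2)*xr psi 0*yr psi 6 + (2)*xr psi 1*yr psi 7 + (-2)*xr psi 2*yr psi 4 + (-2)*xr psi 3*yr psi 5 + (2)*xr psi 4*yr psi 2 + (2)*xr psi 5*yr psi 3 + (-2)*xr psi 6*yr psi 0 + (-2)*xr psi 7*yr psi 1)"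
  unfolding tc[OF rhoAB_c] xr_def yr_def
  apply (simp add: sum4 rho_AB_def kron2_def pauli_ent pauli_ent1 sum2)
  apply ((simp only: One_nat_def[symmetric] Suc_1 Suc_numeral add_num_simps)?)
  apply (simp add: algebra_simps power2_eq_square)?
  done

lemma t_AB_13: "tcorr (rho_AB psi) 1 3 = ((2)*xr psi 0*xr psi 4 + (2)*xr psi 1*xr psi 5 + (-2)*xr psi 2*xr psi 6 + (-2)*xr psi 3*xr psi 7 + (2)*yr psi 0*yr psi 4 + (2)*yr psi 1*yr psi 5 + (-2)*yr psi 2*yr psi 6 + (-2)*yr psi 3*yr psi 7)"
  unfolding tc[OF rhoAB_c] xr_def yr_def
  apply (simp add: sum4 rho_AB_def kron2_def pauli_ent pauli_ent1 sum2)
  apply ((simp only: One_nat_def[symmetric] Suc_1 Suc_numeral add_num_simps)?)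
  apply (simp add: algebra_simps power2_eq_square)?
  done

lemma t_AB_21: "tcorr (rho_AB psi) 2 1 = ((2)*xr psi 0*yr psi 6 + (2)*xr psi 1*yr psi 7 + (2)*xr psi 2*yr psi 4 + (2)*xr psi 3*yr psi 5 + (-2)*xr psi 4*yr psi 2 + (-2)*xr psi 5*yr psi 3 + (-2)*xr psi 6*yr psi 0 + (-2)*xr psi 7*yr psi 1)"
  unfolding tc[OF rhoAB_c] xr_def yr_def
  apply (simp add: sum4 rho_AB_def kron2_def pauli_ent pauli_ent1 sum2)
  apply ((simp only: One_nat_def[symmetric] Suc_1 Suc_numeral add_num_simps)?)
  apply (simp add: algebra_simps power2_eq_square)?
  done

lemma t_AB_22: "tcorr (rho_AB psi) 2 2 = ((-2)*xr psi 0*xr psi 6 + (-2)*xr psi 1*xr psi 7 + (2)*xr psi 2*xr psi 4 + (2)*xr psi 3*xr psi 5 + (-2)*yr psi 0*yr psi 6 + (-2)*yr psi 1*yr psi 7 + (2)*yr psi 2*yr psi 4 + (2)*yr psi 3*yr psi 5)"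
  unfolding tc[OF rhoAB_c] xr_def yr_def
  apply (simp add: sum4 rho_AB_def kron2_def pauli_ent pauli_ent1 sum2)
  apply ((simp only: One_nat_def[symmetric] Suc_1 Suc_numeral add_num_simps)?)
  apply (simp add: algebra_simps power2_eq_square)?
  done

lemma t_AB_23: "tcorr (rho_AB psi) 2 3 = ((2)*xr psi 0*yr psi 4 + (2)*xr psi 1*yr psi 5 + (-2)*xr psi 2*yr psi 6 + (-2)*xr psi 3*yr psi 7 + (-2)*xr psi 4*yr psi 0 + (-2)*xr psi 5*yr psi 1 + (2)*xr psi 6*yr psi 2 + (2)*xr psi 7*yr psi 3)"
  unfolding tc[OF rhoAB_c] xr_def yr_def
  apply (simp add: sum4 rho_AB_def kron2_def pauli_ent pauli_ent1 sum2)
  apply ((simp only: One_nat_def[symmetric] Suc_1 Suc_numeral add_num_simps)?)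
  apply (simp add: algebra_simps power2_eq_square)?
  done

lemma t_AB_31: "tcorr (rho_AB psi) 3 1 = ((2)*xr psi 0*xr psi 2 + (2)*xr psi 1*xr psi 3 + (-2)*xr psi 4*xr psi 6 + (-2)*xr psi 5*xr psi 7 + (2)*yr psi 0*yr psi 2 + (2)*yr psi 1*yr psi 3 + (-2)*yr psi 4*yr psi 6 + (-2)*yr psi 5*yr psi 7)"
  unfolding tc[OF rhoAB_c] xr_def yr_def
  apply (simp add: sum4 rho_AB_def kron2_def pauli_ent pauli_ent1 sum2)
  apply ((simp only: One_nat_def[symmetric] Suc_1 Suc_numeral add_num_simps)?)
  apply (simp add: algebra_simps power2_eq_square)?
  done

lemma t_AB_32: "tcorr (rho_AB psi) 3 2 = ((2)*xr psi 0*yr psi 2 + (2)*xr psi 1*yr psi 3 + (-2)*xr psi 2*yr psi 0 + (-2)*xr psi 3*yr psi 1 + (-2)*xr psi 4*yr psi 6 + (-2)*xr psi 5*yr psi 7 + (2)*xr psi 6*yr psi 4 + (2)*xr psi 7*yr psi 5)"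
  unfolding tc[OF rhoAB_c] xr_def yr_def
  apply (simp add: sum4 rho_AB_def kron2_def pauli_ent pauli_ent1 sum2)
  apply ((simp only: One_nat_def[symmetric] Suc_1 Suc_numeral add_num_simps)?)
  apply (simp add: algebra_simps power2_eq_square)?
  done

lemma t_AB_33: "tcorr (rho_AB psi) 3 3 = (xr psi 0^2 + xr psi 1^2 + (-(xr psi 2^2)) + (-(xr psi 3^2)) + (-(xr psi 4^2)) + (-(xr psi 5^2)) + xr psi 6^2 + xr psi 7^2 + yr psi 0^2 + yr psi 1^2 + (-(yr psi 2^2)) + (-(yr psi 3^2)) + (-(yr psi 4^2)) + (-(yr psi 5^2)) + yr psi 6^2 + yr psi 7^2)"
  unfolding tc[OF rhoAB_c] xr_def yr_def
  apply (simp add: sum4 rho_AB_def kron2_def pauli_ent pauli_ent1 sum2)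
  apply ((simp only: One_nat_def[symmetric] Suc_1 Suc_numeral add_num_simps)?)
  apply (simp add: algebra_simps power2_eq_square)?
  done

lemma t_AC_11: "tcorr (rho_AC psi) 1 1 = ((2)*xr psi 0*xr psi 5 + (2)*xr psi 1*xr psi 4 + (2)*xr psi 2*xr psi 7 + (2)*xr psi 3*xr psi 6 + (2)*yr psi 0*yr psi 5 + (2)*yr psi 1*yr psi 4 + (2)*yr psi 2*yr psi 7 + (2)*yr psi 3*yr psi 6)"
  unfolding tc[OF rhoAC_c] xr_def yr_def
  apply (simp add: sum4 rho_AC_def kron2_def pauli_ent pauli_ent1 sum2)
  apply ((simp only: One_nat_def[symmetric] Suc_1 Suc_numeral add_num_simps)?)
  apply (simp add: algebra_simps power2_eq_square)?
  done

lemma t_AC_12: "tcorr (rho_AC psi) 1 2 = ((2)*xr psi 0*yr psi 5 + (-2)*xr psi 1*yr psi 4 + (2)*xr psi 2*yr psi 7 + (-2)*xr psi 3*yr psi 6 + (2)*xr psi 4*yr psi 1 + (-2)*xr psi 5*yr psi 0 + (2)*xr psi 6*yr psi 3 + (-2)*xr psi 7*yr psi 2)"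
  unfolding tc[OF rhoAC_c] xr_def yr_def
  apply (simp add: sum4 rho_AC_def kron2_def pauli_ent pauli_ent1 sum2)
  apply ((simp only: One_nat_def[symmetric] Suc_1 Suc_numeral add_num_simps)?)
  apply (simp add: algebra_simps power2_eq_square)?
  done

lemma t_AC_13: "tcorr (rho_AC psi) 1 3 = ((2)*xr psi 0*xr psi 4 + (-2)*xr psi 1*xr psi 5 + (2)*xr psi 2*xr psi 6 + (-2)*xr psi 3*xr psi 7 + (2)*yr psi 0*yr psi 4 + (-2)*yr psi 1*yr psi 5 + (2)*yr psi 2*yr psi 6 + (-2)*yr psi 3*yr psi 7)"
  unfolding tc[OF rhoAC_c] xr_def yr_def
  apply (simp add: sum4 rho_AC_def kron2_def pauli_ent pauli_ent1 sum2)
  apply ((simp only: One_nat_def[symmetric] Suc_1 Suc_numeral add_num_simps)?)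
  apply (simp add: algebra_simps power2_eq_square)?
  done

lemma t_AC_21: "tcorr (rho_AC psi) 2 1 = ((2)*xr psi 0*yr psi 5 + (2)*xr psi 1*yr psi 4 + (2)*xr psi 2*yr psi 7 + (2)*xr psi 3*yr psi 6 + (-2)*xr psi 4*yr psi 1 + (-2)*xr psi 5*yr psi 0 + (-2)*xr psi 6*yr psi 3 + (-2)*xr psi 7*yr psi 2)"
  unfolding tc[OF rhoAC_c] xr_def yr_def
  apply (simp add: sum4 rho_AC_def kron2_def pauli_ent pauli_ent1 sum2)
  apply ((simp only: One_nat_def[symmetric] Suc_1 Suc_numeral add_num_simps)?)
  apply (simp add: algebra_simps power2_eq_square)?
  done

lemma t_AC_22: "tcorr (rho_AC psi) 2 2 = ((-2)*xr psi 0*xr psi 5 + (2)*xr psi 1*xr psi 4 + (-2)*xr psi 2*xr psi 7 + (2)*xr psi 3*xr psi 6 + (-2)*yr psi 0*yr psi 5 + (2)*yr psi 1*yr psi 4 + (-2)*yr psi 2*yr psi 7 + (2)*yr psi 3*yr psi 6)"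
  unfolding tc[OF rhoAC_c] xr_def yr_def
  apply (simp add: sum4 rho_AC_def kron2_def pauli_ent pauli_ent1 sum2)
  apply ((simp only: One_nat_def[symmetric] Suc_1 Suc_numeral add_num_simps)?)
  apply (simp add: algebra_simps power2_eq_square)?
  done

lemma t_AC_23: "tcorr (rho_AC psi) 2 3 = ((2)*xr psi 0*yr psi 4 + (-2)*xr psi 1*yr psi 5 + (2)*xr psi 2*yr psi 6 + (-2)*xr psi 3*yr psi 7 + (-2)*xr psi 4*yr psi 0 + (2)*xr psi 5*yr psi 1 + (-2)*xr psi 6*yr psi 2 + (2)*xr psi 7*yr psi 3)"
  unfolding tc[OF rhoAC_c] xr_def yr_def
  apply (simp add: sum4 rho_AC_def kron2_def pauli_ent pauli_ent1 sum2)
  apply ((simp only: One_nat_def[symmetric] Suc_1 Suc_numeral add_num_simps)?)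
  apply (simp add: algebra_simps power2_eq_square)?
  done

lemma t_AC_31: "tcorr (rho_AC psi) 3 1 = ((2)*xr psi 0*xr psi 1 + (2)*xr psi 2*xr psi 3 + (-2)*xr psi 4*xr psi 5 + (-2)*xr psi 6*xr psi 7 + (2)*yr psi 0*yr psi 1 + (2)*yr psi 2*yr psi 3 + (-2)*yr psi 4*yr psi 5 + (-2)*yr psi 6*yr psi 7)"
  unfolding tc[OF rhoAC_c] xr_def yr_def
  apply (simp add: sum4 rho_AC_def kron2_def pauli_ent pauli_ent1 sum2)
  apply ((simp only: One_nat_def[symmetric] Suc_1 Suc_numeral add_num_simps)?)
  apply (simp add: algebra_simps power2_eq_square)?
  done

lemma t_AC_32: "tcorr (rho_AC psi) 3 2 = ((2)*xr psi 0*yr psi 1 + (-2)*xr psi 1*yr psi 0 + (2)*xr psi 2*yr psi 3 + (-2)*xr psi 3*yr psi 2 + (-2)*xr psi 4*yr psi 5 + (2)*xr psi 5*yr psi 4 + (-2)*xr psi 6*yr psi 7 + (2)*xr psi 7*yr psi 6)"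
  unfolding tc[OF rhoAC_c] xr_def yr_def
  apply (simp add: sum4 rho_AC_def kron2_def pauli_ent pauli_ent1 sum2)
  apply ((simp only: One_nat_def[symmetric] Suc_1 Suc_numeral add_num_simps)?)
  apply (simp add: algebra_simps power2_eq_square)?
  done

lemma t_AC_33: "tcorr (rho_AC psi) 3 3 = (xr psi 0^2 + (-(xr psi 1^2)) + xr psi 2^2 + (-(xr psi 3^2)) + (-(xr psi 4^2)) + xr psi 5^2 + (-(xr psi 6^2)) + xr psi 7^2 + yr psi 0^2 + (-(yr psi 1^2)) + yr psi 2^2 + (-(yr psi 3^2)) + (-(yr psi 4^2)) + yr psi 5^2 + (-(yr psi 6^2)) + yr psi 7^2)"
  unfolding tc[OF rhoAC_c] xr_def yr_def
  apply (simp add: sum4 rho_AC_def kron2_def pauli_ent pauli_ent1 sum2)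
  apply ((simp only: One_nat_def[symmetric] Suc_1 Suc_numeral add_num_simps)?)
  apply (simp add: algebra_simps power2_eq_square)?
  done

lemma t_BC_11: "tcorr (rho_BC psi) 1 1 = ((2)*xr psi 0*xr psi 3 + (2)*xr psi 1*xr psi 2 + (2)*xr psi 4*xr psi 7 + (2)*xr psi 5*xr psi 6 + (2)*yr psi 0*yr psi 3 + (2)*yr psi 1*yr psi 2 + (2)*yr psi 4*yr psi 7 + (2)*yr psi 5*yr psi 6)"
  unfolding tc[OF rhoBC_c] xr_def yr_def
  apply (simp add: sum4 rho_BC_def kron2_def pauli_ent pauli_ent1 sum2)
  apply ((simp only: One_nat_def[symmetric] Suc_1 Suc_numeral add_num_simps)?)
  apply (simp add: algebra_simps power2_eq_square)?
  done

lemma t_BC_12: "tcorr (rho_BC psi) 1 2 = ((2)*xr psi 0*yr psi 3 + (-2)*xr psi 1*yr psi 2 + (2)*xr psi 2*yr psi 1 + (-2)*xr psi 3*yr psi 0 + (2)*xr psi 4*yr psi 7 + (-2)*xr psi 5*yr psi 6 + (2)*xr psi 6*yr psi 5 + (-2)*xr psi 7*yr psi 4)"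
  unfolding tc[OF rhoBC_c] xr_def yr_def
  apply (simp add: sum4 rho_BC_def kron2_def pauli_ent pauli_ent1 sum2)
  apply ((simp only: One_nat_def[symmetric] Suc_1 Suc_numeral add_num_simps)?)
  apply (simp add: algebra_simps power2_eq_square)?
  done

lemma t_BC_13: "tcorr (rho_BC psi) 1 3 = ((2)*xr psi 0*xr psi 2 + (-2)*xr psi 1*xr psi 3 + (2)*xr psi 4*xr psi 6 + (-2)*xr psi 5*xr psi 7 + (2)*yr psi 0*yr psi 2 + (-2)*yr psi 1*yr psi 3 + (2)*yr psi 4*yr psi 6 + (-2)*yr psi 5*yr psi 7)"
  unfolding tc[OF rhoBC_c] xr_def yr_def
  apply (simp add: sum4 rho_BC_def kron2_def pauli_ent pauli_ent1 sum2)
  apply ((simp only: One_nat_def[symmetric] Suc_1 Suc_numeral add_num_simps)?)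
  apply (simp add: algebra_simps power2_eq_square)?
  done

lemma t_BC_21: "tcorr (rho_BC psi) 2 1 = ((2)*xr psi 0*yr psi 3 + (2)*xr psi 1*yr psi 2 + (-2)*xr psi 2*yr psi 1 + (-2)*xr psi 3*yr psi 0 + (2)*xr psi 4*yr psi 7 + (2)*xr psi 5*yr psi 6 + (-2)*xr psi 6*yr psi 5 + (-2)*xr psi 7*yr psi 4)"
  unfolding tc[OF rhoBC_c] xr_def yr_def
  apply (simp add: sum4 rho_BC_def kron2_def pauli_ent pauli_ent1 sum2)
  apply ((simp only: One_nat_def[symmetric] Suc_1 Suc_numeral add_num_simps)?)
  apply (simp add: algebra_simps power2_eq_square)?
  done

lemma t_BC_22: "tcorr (rho_BC psi) 2 2 = ((-2)*xr psi 0*xr psi 3 + (2)*xr psi 1*xr psi 2 + (-2)*xr psi 4*xr psi 7 + (2)*xr psi 5*xr psi 6 + (-2)*yr psi 0*yr psi 3 + (2)*yr psi 1*yr psi 2 + (-2)*yr psi 4*yr psi 7 + (2)*yr psi 5*yr psi 6)"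
  unfolding tc[OF rhoBC_c] xr_def yr_def
  apply (simp add: sum4 rho_BC_def kron2_def pauli_ent pauli_ent1 sum2)
  apply ((simp only: One_nat_def[symmetric] Suc_1 Suc_numeral add_num_simps)?)
  apply (simp add: algebra_simps power2_eq_square)?
  done

lemma t_BC_23: "tcorr (rho_BC psi) 2 3 = ((2)*xr psi 0*yr psi 2 + (-2)*xr psi 1*yr psi 3 + (-2)*xr psi 2*yr psi 0 + (2)*xr psi 3*yr psi 1 + (2)*xr psi 4*yr psi 6 + (-2)*xr psi 5*yr psi 7 + (-2)*xr psi 6*yr psi 4 + (2)*xr psi 7*yr psi 5)"
  unfolding tc[OF rhoBC_c] xr_def yr_def
  apply (simp add: sum4 rho_BC_def kron2_def pauli_ent pauli_ent1 sum2)
  apply ((simp only: One_nat_def[symmetric] Suc_1 Suc_numeral add_num_simps)?)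
  apply (simp add: algebra_simps power2_eq_square)?
  done

lemma t_BC_31: "tcorr (rho_BC psi) 3 1 = ((2)*xr psi 0*xr psi 1 + (-2)*xr psi 2*xr psi 3 + (2)*xr psi 4*xr psi 5 + (-2)*xr psi 6*xr psi 7 + (2)*yr psi 0*yr psi 1 + (-2)*yr psi 2*yr psi 3 + (2)*yr psi 4*yr psi 5 + (-2)*yr psi 6*yr psi 7)"
  unfolding tc[OF rhoBC_c] xr_def yr_def
  apply (simp add: sum4 rho_BC_def kron2_def pauli_ent pauli_ent1 sum2)
  apply ((simp only: One_nat_def[symmetric] Suc_1 Suc_numeral add_num_simps)?)
  apply (simp add: algebra_simps power2_eq_square)?
  done

lemma t_BC_32: "tcorr (rho_BC psi) 3 2 = ((2)*xr psi 0*yr psi 1 + (-2)*xr psi 1*yr psi 0 + (-2)*xr psi 2*yr psi 3 + (2)*xr psi 3*yr psi 2 + (2)*xr psi 4*yr psi 5 + (-2)*xr psi 5*yr psi 4 + (-2)*xr psi 6*yr psi 7 + (2)*xr psi 7*yr psi 6)"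
  unfolding tc[OF rhoBC_c] xr_def yr_def
  apply (simp add: sum4 rho_BC_def kron2_def pauli_ent pauli_ent1 sum2)
  apply ((simp only: One_nat_def[symmetric] Suc_1 Suc_numeral add_num_simps)?)
  apply (simp add: algebra_simps power2_eq_square)?
  done

lemma t_BC_33: "tcorr (rho_BC psi) 3 3 = (xr psi 0^2 + (-(xr psi 1^2)) + (-(xr psi 2^2)) + xr psi 3^2 + xr psi 4^2 + (-(xr psi 5^2)) + (-(xr psi 6^2)) + xr psi 7^2 + yr psi 0^2 + (-(yr psi 1^2)) + (-(yr psi 2^2)) + yr psi 3^2 + yr psi 4^2 + (-(yr psi 5^2)) + (-(yr psi 6^2)) + yr psi 7^2)"
  unfolding tc[OF rhoBC_c] xr_def yr_def
  apply (simp add: sum4 rho_BC_def kron2_def pauli_ent pauli_ent1 sum2)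
  apply ((simp only: One_nat_def[symmetric] Suc_1 Suc_numeral add_num_simps)?)
  apply (simp add: algebra_simps power2_eq_square)?
  done

lemma TT_AB: "TT (vAB0 psi) (vAB1 psi) = ((4)*xr psi 0*xr psi 1*xr psi 6*xr psi 7 + (4)*xr psi 0*xr psi 1*yr psi 6*yr psi 7 + (-8)*xr psi 0*xr psi 2*xr psi 4*xr psi 6 + (-4)*xr psi 0*xr psi 2*xr psi 5*xr psi 7 + (-8)*xr psi 0*xr psi 2*yr psi 4*yr psi 6 + (-4)*xr psi 0*xr psi 2*yr psi 5*yr psi 7 + (-4)*xr psi 0*xr psi 3*xr psi 4*xr psi 7 + (-4)*xr psi 0*xr psi 3*yr psi 4*yr psi 7 + (-8)*xr psi 0*xr psi 4*yr psi 2*yr psi 6 + (-4)*xr psi 0*xr psi 4*yr psi 3*yr psi 7 + (-4)*xr psi 0*xr psi 5*yr psi 2*yr psi 7 + (4)*xr psi 0*xr psi 6*yr psi 1*yr psi 7 + (8)*xr psi 0*xr psi 6*yr psi 2*yr psi 4 + (-4)*xr psi 0*xr psi 7*yr psi 1*yr psi 6 + (4)*xr psi 0*xr psi 7*yr psi 2*yr psi 5 + (4)*xr psi 0*xr psi 7*yr psi 3*yr psi 4 + (4)*xr psi 0^2*xr psi 6^2 + (2)*xr psi 0^2*xr psi 7^2 + (4)*xr psi 0^2*yr psi 6^2 + (2)*xr psi 0^2*yr psi 7^2 + (-4)*xr psi 1*xr psi 2*xr psi 5*xr psi 6 + (-4)*xr psi 1*xr psi 2*yr psi 5*yr psi 6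 + (-4)*xr psi 1*xr psi 3*xr psi 4*xr psi 6 + (-8)*xr psi 1*xr psi 3*xr psi 5*xr psi 7 + (-4)*xr psi 1*xr psi 3*yr psi 4*yr psi 6 + (-8)*xr psi 1*xr psi 3*yr psi 5*yr psi 7 + (-4)*xr psi 1*xr psi 4*yr psi 3*yr psi 6 + (-4)*xr psi 1*xr psi 5*yr psi 2*yr psi 6 + (-8)*xr psi 1*xr psi 5*yr psi 3*yr psi 7 + (-4)*xr psi 1*xr psi 6*yr psi 0*yr psi 7 + (4)*xr psi 1*xr psi 6*yr psi 2*yr psi 5 + (4)*xr psi 1*xr psi 6*yr psi 3*yr psi 4 + (4)*xr psi 1*xr psi 7*yr psi 0*yr psi 6 + (8)*xr psi 1*xr psi 7*yr psi 3*yr psi 5 + (2)*xr psi 1^2*xr psi 6^2 + (4)*xr psi 1^2*xr psi 7^2 + (2)*xr psi 1^2*yr psi 6^2 + (4)*xr psi 1^2*yr psi 7^2 + (4)*xr psi 2*xr psi 3*xr psi 4*xr psi 5 + (4)*xr psi 2*xr psi 3*yr psi 4*yr psi 5 + (8)*xr psi 2*xr psi 4*yr psi 0*yr psi 6 + (4)*xr psi 2*xr psi 4*yr psi 3*yr psi 5 + (4)*xr psi 2*xr psi 5*yr psi 0*yr psi 7 + (4)*xr psi 2*xr psi 5*yr psi 1*yr psi 6 + (-4)*xr psi 2*xr psi 5*yr psi 3*yr psi 4 + (-8)*xr psi 2*xr psi 6*yr psi 0*yr psi 4 + (-4)*xr psi 2*xr psi 6*yr psi 1*yr psi 5 + (-4)*xr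 psi 2*xr psi 7*yr psi 0*yr psi 5 + (4)*xr psi 2^2*xr psi 4^2 + (2)*xr psi 2^2*xr psi 5^2 + (4)*xr psi 2^2*yr psi 4^2 + (2)*xr psi 2^2*yr psi 5^2 + (4)*xr psi 3*xr psi 4*yr psi 0*yr psi 7 + (4)*xr psi 3*xr psi 4*yr psi 1*yr psi 6 + (-4)*xr psi 3*xr psi 4*yr psi 2*yr psi 5 + (8)*xr psi 3*xr psi 5*yr psi 1*yr psi 7 + (4)*xr psi 3*xr psi 5*yr psi 2*yr psi 4 + (-4)*xr psi 3*xr psi 6*yr psi 1*yr psi 4 + (-4)*xr psi 3*xr psi 7*yr psi 0*yr psi 4 + (-8)*xr psi 3*xr psi 7*yr psi 1*yr psi 5 + (2)*xr psi 3^2*xr psi 4^2 + (4)*xr psi 3^2*xr psi 5^2 + (2)*xr psi 3^2*yr psi 4^2 + (4)*xr psi 3^2*yr psi 5^2 + (4)*xr psi 4*xr psi 5*yr psi 2*yr psi 3 + (-8)*xr psi 4*xr psi 6*yr psi 0*yr psi 2 + (-4)*xr psi 4*xr psi 6*yr psi 1*yr psi 3 + (-4)*xr psi 4*xr psi 7*yr psi 0*yr psi 3 + (4)*xr psi 4^2*yr psi 2^2 + (2)*xr psi 4^2*yr psi 3^2 + (-4)*xr psi 5*xr psi 6*yr psi 1*yr psi 2 + (-4)*xr psi 5*xr psi 7*yr psi 0*yr psi 2 + (-8)*xr psi 5*xr psi 7*yr psi 1*yr psi 3 + (2)*xr psi 5^2*yr psi 2^2 + (4)*xr psi 5^2*yr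 psi 3^2 + (4)*xr psi 6*xr psi 7*yr psi 0*yr psi 1 + (4)*xr psi 6^2*yr psi 0^2 + (2)*xr psi 6^2*yr psi 1^2 + (2)*xr psi 7^2*yr psi 0^2 + (4)*xr psi 7^2*yr psi 1^2 + (4)*yr psi 0*yr psi 1*yr psi 6*yr psi 7 + (-8)*yr psi 0*yr psi 2*yr psi 4*yr psi 6 + (-4)*yr psi 0*yr psi 2*yr psi 5*yr psi 7 + (-4)*yr psi 0*yr psi 3*yr psi 4*yr psi 7 + (4)*yr psi 0^2*yr psi 6^2 + (2)*yr psi 0^2*yr psi 7^2 + (-4)*yr psi 1*yr psi 2*yr psi 5*yr psi 6 + (-4)*yr psi 1*yr psi 3*yr psi 4*yr psi 6 + (-8)*yr psi 1*yr psi 3*yr psi 5*yr psi 7 + (2)*yr psi 1^2*yr psi 6^2 + (4)*yr psi 1^2*yr psi 7^2 + (4)*yr psi 2*yr psi 3*yr psi 4*yr psi 5 + (4)*yr psi 2^2*yr psi 4^2 + (2)*yr psi 2^2*yr psi 5^2 + (2)*yr psi 3^2*yr psi 4^2 + (4)*yr psi 3^2*yr psi 5^2)"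
  unfolding TT_def bil_def vAB0_def vAB1_def cmod_sq xr_def yr_def
  apply (simp add: power2_eq_square)
  apply ((simp only: One_nat_def[symmetric] Suc_1 Suc_numeral add_num_simps)?)
  apply Groebner_Basis.algebra?
  done

lemma TT_AC: "TT (vAC0 psi) (vAC1 psi) = ((-8)*xr psi 0*xr psi 1*xr psi 4*xr psi 5 + (-4)*xr psi 0*xr psi 1*xr psi 6*xr psi 7 + (-8)*xr psi 0*xr psi 1*yr psi 4*yr psi 5 + (-4)*xr psi 0*xr psi 1*yr psi 6*yr psi 7 + (4)*xr psi 0*xr psi 2*xr psi 5*xr psi 7 + (4)*xr psi 0*xr psi 2*yr psi 5*yr psi 7 + (-4)*xr psi 0*xr psi 3*xr psi 4*xr psi 7 + (-4)*xr psi 0*xr psi 3*yr psi 4*yr psi 7 + (-8)*xr psi 0*xr psi 4*yr psi 1*yr psi 5 + (-4)*xr psi 0*xr psi 4*yr psi 3*yr psi 7 + (8)*xr psi 0*xr psi 5*yr psi 1*yr psi 4 + (4)*xr psi 0*xr psi 5*yr psi 2*yr psi 7 + (-4)*xr psi 0*xr psi 6*yr psi 1*yr psi 7 + (4)*xr psi 0*xr psi 7*yr psi 1*yr psi 6 + (-4)*xr psi 0*xr psi 7*yr psi 2*yr psi 5 + (4)*xr psi 0*xr psi 7*yr psi 3*yr psi 4 + (4)*xr psi 0^2*xr psi 5^2 + (2)*xr psi 0^2*xr psi 7^2 + (4)*xr psi 0^2*yr psi 5^2 + (2)*xr psi 0^2*yr psi 7^2 + (-4)*xr psi 1*xr psi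 2*xr psi 5*xr psi 6 + (-4)*xr psi 1*xr psi 2*yr psi 5*yr psi 6 + (4)*xr psi 1*xr psi 3*xr psi 4*xr psi 6 + (4)*xr psi 1*xr psi 3*yr psi 4*yr psi 6 + (8)*xr psi 1*xr psi 4*yr psi 0*yr psi 5 + (4)*xr psi 1*xr psi 4*yr psi 3*yr psi 6 + (-8)*xr psi 1*xr psi 5*yr psi 0*yr psi 4 + (-4)*xr psi 1*xr psi 5*yr psi 2*yr psi 6 + (4)*xr psi 1*xr psi 6*yr psi 0*yr psi 7 + (4)*xr psi 1*xr psi 6*yr psi 2*yr psi 5 + (-4)*xr psi 1*xr psi 6*yr psi 3*yr psi 4 + (-4)*xr psi 1*xr psi 7*yr psi 0*yr psi 6 + (4)*xr psi 1^2*xr psi 4^2 + (2)*xr psi 1^2*xr psi 6^2 + (4)*xr psi 1^2*yr psi 4^2 + (2)*xr psi 1^2*yr psi 6^2 + (-4)*xr psi 2*xr psi 3*xr psi 4*xr psi 5 + (-8)*xr psi 2*xr psi 3*xr psi 6*xr psi 7 + (-4)*xr psi 2*xr psi 3*yr psi 4*yr psi 5 + (-8)*xr psi 2*xr psi 3*yr psi 6*yr psi 7 + (-4)*xr psi 2*xr psi 4*yr psi 3*yr psi 5 + (-4)*xr psi 2*xr psi 5*yr psi 0*yr psi 7 + (4)*xr psi 2*xr psi 5*yr psi 1*yr psi 6 + (4)*xr psi 2*xr psi 5*yr psi 3*yr psi 4 + (-4)*xr psi 2*xr psi 6*yr psi 1*yr psi 5 + (-8)*xr psi 2*xr psi 6*yr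 psi 3*yr psi 7 + (4)*xr psi 2*xr psi 7*yr psi 0*yr psi 5 + (8)*xr psi 2*xr psi 7*yr psi 3*yr psi 6 + (2)*xr psi 2^2*xr psi 5^2 + (4)*xr psi 2^2*xr psi 7^2 + (2)*xr psi 2^2*yr psi 5^2 + (4)*xr psi 2^2*yr psi 7^2 + (4)*xr psi 3*xr psi 4*yr psi 0*yr psi 7 + (-4)*xr psi 3*xr psi 4*yr psi 1*yr psi 6 + (4)*xr psi 3*xr psi 4*yr psi 2*yr psi 5 + (-4)*xr psi 3*xr psi 5*yr psi 2*yr psi 4 + (4)*xr psi 3*xr psi 6*yr psi 1*yr psi 4 + (8)*xr psi 3*xr psi 6*yr psi 2*yr psi 7 + (-4)*xr psi 3*xr psi 7*yr psi 0*yr psi 4 + (-8)*xr psi 3*xr psi 7*yr psi 2*yr psi 6 + (2)*xr psi 3^2*xr psi 4^2 + (4)*xr psi 3^2*xr psi 6^2 + (2)*xr psi 3^2*yr psi 4^2 + (4)*xr psi 3^2*yr psi 6^2 + (-8)*xr psi 4*xr psi 5*yr psi 0*yr psi 1 + (-4)*xr psi 4*xr psi 5*yr psi 2*yr psi 3 + (4)*xr psi 4*xr psi 6*yr psi 1*yr psi 3 + (-4)*xr psi 4*xr psi 7*yr psi 0*yr psi 3 + (4)*xr psi 4^2*yr psi 1^2 + (2)*xr psi 4^2*yr psi 3^2 + (-4)*xr psi 5*xr psi 6*yr psi 1*yr psi 2 + (4)*xr psi 5*xr psi 7*yr psi 0*yr psi 2 + (4)*xr psi 5^2*yr psi 0^2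 + (2)*xr psi 5^2*yr psi 2^2 + (-4)*xr psi 6*xr psi 7*yr psi 0*yr psi 1 + (-8)*xr psi 6*xr psi 7*yr psi 2*yr psi 3 + (2)*xr psi 6^2*yr psi 1^2 + (4)*xr psi 6^2*yr psi 3^2 + (2)*xr psi 7^2*yr psi 0^2 + (4)*xr psi 7^2*yr psi 2^2 + (-8)*yr psi 0*yr psi 1*yr psi 4*yr psi 5 + (-4)*yr psi 0*yr psi 1*yr psi 6*yr psi 7 + (4)*yr psi 0*yr psi 2*yr psi 5*yr psi 7 + (-4)*yr psi 0*yr psi 3*yr psi 4*yr psi 7 + (4)*yr psi 0^2*yr psi 5^2 + (2)*yr psi 0^2*yr psi 7^2 + (-4)*yr psi 1*yr psi 2*yr psi 5*yr psi 6 + (4)*yr psi 1*yr psi 3*yr psi 4*yr psi 6 + (4)*yr psi 1^2*yr psi 4^2 + (2)*yr psi 1^2*yr psi 6^2 + (-4)*yr psi 2*yr psi 3*yr psi 4*yr psi 5 + (-8)*yr psi 2*yr psi 3*yr psi 6*yr psi 7 + (2)*yr psi 2^2*yr psi 5^2 + (4)*yr psi 2^2*yr psi 7^2 + (2)*yr psi 3^2*yr psi 4^2 + (4)*yr psi 3^2*yr psi 6^2)"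
  unfolding TT_def bil_def vAC0_def vAC1_def cmod_sq xr_def yr_def
  apply (simp add: power2_eq_square)
  apply ((simp only: One_nat_def[symmetric] Suc_1 Suc_numeral add_num_simps)?)
  apply Groebner_Basis.algebra?
  done

lemma TT_BC: "TT (vBC0 psi) (vBC1 psi) = ((-8)*xr psi 0*xr psi 1*xr psi 2*xr psi 3 + (-4)*xr psi 0*xr psi 1*xr psi 6*xr psi 7 + (-8)*xr psi 0*xr psi 1*yr psi 2*yr psi 3 + (-4)*xr psi 0*xr psi 1*yr psi 6*yr psi 7 + (-4)*xr psi 0*xr psi 2*xr psi 5*xr psi 7 + (-8)*xr psi 0*xr psi 2*yr psi 1*yr psi 3 + (-4)*xr psi 0*xr psi 2*yr psi 5*yr psi 7 + (4)*xr psi 0*xr psi 3*xr psi 4*xr psi 7 + (8)*xr psi 0*xr psi 3*yr psi 1*yr psi 2 + (4)*xr psi 0*xr psi 3*yr psi 4*yr psi 7 + (4)*xr psi 0*xr psi 4*yr psi 3*yr psi 7 + (-4)*xr psi 0*xr psi 5*yr psi 2*yr psi 7 + (-4)*xr psi 0*xr psi 6*yr psi 1*yr psi 7 + (4)*xr psi 0*xr psi 7*yr psi 1*yr psi 6 + (4)*xr psi 0*xr psi 7*yr psi 2*yr psi 5 + (-4)*xr psi 0*xr psi 7*yr psi 3*yr psi 4 + (4)*xr psi 0^2*xr psi 3^2 + (2)*xr psi 0^2*xr psi 7^2 + (4)*xr psi 0^2*yr psi 3^2 + (2)*xr psi 0^2*yr psi 7^2 + (4)*xr psi 1*xr psi 2*xr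 psi 5*xr psi 6 + (8)*xr psi 1*xr psi 2*yr psi 0*yr psi 3 + (4)*xr psi 1*xr psi 2*yr psi 5*yr psi 6 + (-4)*xr psi 1*xr psi 3*xr psi 4*xr psi 6 + (-8)*xr psi 1*xr psi 3*yr psi 0*yr psi 2 + (-4)*xr psi 1*xr psi 3*yr psi 4*yr psi 6 + (-4)*xr psi 1*xr psi 4*yr psi 3*yr psi 6 + (4)*xr psi 1*xr psi 5*yr psi 2*yr psi 6 + (4)*xr psi 1*xr psi 6*yr psi 0*yr psi 7 + (-4)*xr psi 1*xr psi 6*yr psi 2*yr psi 5 + (4)*xr psi 1*xr psi 6*yr psi 3*yr psi 4 + (-4)*xr psi 1*xr psi 7*yr psi 0*yr psi 6 + (4)*xr psi 1^2*xr psi 2^2 + (2)*xr psi 1^2*xr psi 6^2 + (4)*xr psi 1^2*yr psi 2^2 + (2)*xr psi 1^2*yr psi 6^2 + (-4)*xr psi 2*xr psi 3*xr psi 4*xr psi 5 + (-8)*xr psi 2*xr psi 3*yr psi 0*yr psi 1 + (-4)*xr psi 2*xr psi 3*yr psi 4*yr psi 5 + (-4)*xr psi 2*xr psi 4*yr psi 3*yr psi 5 + (4)*xr psi 2*xr psi 5*yr psi 0*yr psi 7 + (-4)*xr psi 2*xr psi 5*yr psi 1*yr psi 6 + (4)*xr psi 2*xr psi 5*yr psi 3*yr psi 4 + (4)*xr psi 2*xr psi 6*yr psi 1*yr psi 5 + (-4)*xr psi 2*xr psi 7*yr psi 0*yr psi 5 + (2)*xr psi 2^2*xr psi 5^2 +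 (4)*xr psi 2^2*yr psi 1^2 + (2)*xr psi 2^2*yr psi 5^2 + (-4)*xr psi 3*xr psi 4*yr psi 0*yr psi 7 + (4)*xr psi 3*xr psi 4*yr psi 1*yr psi 6 + (4)*xr psi 3*xr psi 4*yr psi 2*yr psi 5 + (-4)*xr psi 3*xr psi 5*yr psi 2*yr psi 4 + (-4)*xr psi 3*xr psi 6*yr psi 1*yr psi 4 + (4)*xr psi 3*xr psi 7*yr psi 0*yr psi 4 + (2)*xr psi 3^2*xr psi 4^2 + (4)*xr psi 3^2*yr psi 0^2 + (2)*xr psi 3^2*yr psi 4^2 + (-8)*xr psi 4*xr psi 5*xr psi 6*xr psi 7 + (-4)*xr psi 4*xr psi 5*yr psi 2*yr psi 3 + (-8)*xr psi 4*xr psi 5*yr psi 6*yr psi 7 + (-4)*xr psi 4*xr psi 6*yr psi 1*yr psi 3 + (-8)*xr psi 4*xr psi 6*yr psi 5*yr psi 7 + (4)*xr psi 4*xr psi 7*yr psi 0*yr psi 3 + (8)*xr psi 4*xr psi 7*yr psi 5*yr psi 6 + (4)*xr psi 4^2*xr psi 7^2 + (2)*xr psi 4^2*yr psi 3^2 + (4)*xr psi 4^2*yr psi 7^2 + (4)*xr psi 5*xr psi 6*yr psi 1*yr psi 2 + (8)*xr psi 5*xr psi 6*yr psi 4*yr psi 7 + (-4)*xr psi 5*xr psi 7*yr psi 0*yr psi 2 + (-8)*xr psi 5*xr psi 7*yr psi 4*yr psi 6 + (4)*xr psi 5^2*xr psi 6^2 + (2)*xr psi 5^2*yr psi 2^2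 + (4)*xr psi 5^2*yr psi 6^2 + (-4)*xr psi 6*xr psi 7*yr psi 0*yr psi 1 + (-8)*xr psi 6*xr psi 7*yr psi 4*yr psi 5 + (2)*xr psi 6^2*yr psi 1^2 + (4)*xr psi 6^2*yr psi 5^2 + (2)*xr psi 7^2*yr psi 0^2 + (4)*xr psi 7^2*yr psi 4^2 + (-8)*yr psi 0*yr psi 1*yr psi 2*yr psi 3 + (-4)*yr psi 0*yr psi 1*yr psi 6*yr psi 7 + (-4)*yr psi 0*yr psi 2*yr psi 5*yr psi 7 + (4)*yr psi 0*yr psi 3*yr psi 4*yr psi 7 + (4)*yr psi 0^2*yr psi 3^2 + (2)*yr psi 0^2*yr psi 7^2 + (4)*yr psi 1*yr psi 2*yr psi 5*yr psi 6 + (-4)*yr psi 1*yr psi 3*yr psi 4*yr psi 6 + (4)*yr psi 1^2*yr psi 2^2 + (2)*yr psi 1^2*yr psi 6^2 + (-4)*yr psi 2*yr psi 3*yr psi 4*yr psi 5 + (2)*yr psi 2^2*yr psi 5^2 + (2)*yr psi 3^2*yr psi 4^2 + (-8)*yr psi 4*yr psi 5*yr psi 6*yr psi 7 + (4)*yr psi 4^2*yr psi 7^2 + (4)*yr psi 5^2*yr psi 6^2)"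
  unfolding TT_def bil_def vBC0_def vBC1_def cmod_sq xr_def yr_def
  apply (simp add: power2_eq_square)
  apply ((simp only: One_nat_def[symmetric] Suc_1 Suc_numeral add_num_simps)?)
  apply Groebner_Basis.algebra?
  done

lemma S_AB: "Ssteer (rho_AB psi) = ((xr psi 0)^2 + (yr psi 0)^2 + (xr psi 1)^2 + (yr psi 1)^2 + (xr psi 2)^2 + (yr psi 2)^2 + (xr psi 3)^2 + (yr psi 3)^2 + (xr psi 4)^2 + (yr psi 4)^2 + (xr psi 5)^2 + (yr psi 5)^2 + (xr psi 6)^2 + (yr psi 6)^2 + (xr psi 7)^2 + (yr psi 7)^2)^2 + 2 * TT (vAB0 psi) (vAB1 psi) - TT (vAC0 psi) (vAC1 psi) - TT (vBC0 psi) (vBC1 psi)"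
  unfolding Ssteer_def sum13 t_AB_11 t_AB_12 t_AB_13 t_AB_21 t_AB_22 t_AB_23 t_AB_31 t_AB_32 t_AB_33 TT_AB TT_AC TT_BC
  by Groebner_Basis.algebra

lemma S_AC: "Ssteer (rho_AC psi) = ((xr psi 0)^2 + (yr psi 0)^2 + (xr psi 1)^2 + (yr psi 1)^2 + (xr psi 2)^2 + (yr psi 2)^2 + (xr psi 3)^2 + (yr psi 3)^2 + (xr psi 4)^2 + (yr psi 4)^2 + (xr psi 5)^2 + (yr psi 5)^2 + (xr psi 6)^2 + (yr psi 6)^2 + (xr psi 7)^2 + (yr psi 7)^2)^2 + 2 * TT (vAC0 psi) (vAC1 psi) - TT (vAB0 psi) (vAB1 psi) - TT (vBC0 psi) (vBC1 psi)"
  unfolding Ssteer_def sum13 t_AC_11 t_AC_12 t_AC_13 t_AC_21 t_AC_22 t_AC_23 t_AC_31 t_AC_32 t_AC_33 TT_AB TT_AC TT_BC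
  by Groebner_Basis.algebra

lemma S_BC: "Ssteer (rho_BC psi) = ((xr psi 0)^2 + (yr psi 0)^2 + (xr psi 1)^2 + (yr psi 1)^2 + (xr psi 2)^2 + (yr psi 2)^2 + (xr psi 3)^2 + (yr psi 3)^2 + (xr psi 4)^2 + (yr psi 4)^2 + (xr psi 5)^2 + (yr psi 5)^2 + (xr psi 6)^2 + (yr psi 6)^2 + (xr psi 7)^2 + (yr psi 7)^2)^2 + 2 * TT (vBC0 psi) (vBC1 psi) - TT (vAB0 psi) (vAB1 psi) - TT (vAC0 psi) (vAC1 psi)"
  unfolding Ssteer_def sum13 t_BC_11 t_BC_12 t_BC_13 t_BC_21 t_BC_22 t_BC_23 t_BC_31 t_BC_32 t_BC_33 TT_AB TT_AC TT_BC
  by Groebner_Basis.algebra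


lemma rhoAB2: "rho_AB psi = rho2 (vAB0 psi) (vAB1 psi)"
  by (rule eq_matI) (auto simp: rho_AB_def rho2_def vAB0_def vAB1_def sum2)
lemma rhoAC2: "rho_AC psi = rho2 (vAC0 psi) (vAC1 psi)"
  by (rule eq_matI) (auto simp: rho_AC_def rho2_def vAC0_def vAC1_def sum2)
lemma rhoBC2: "rho_BC psi = rho2 (vBC0 psi) (vBC1 psi)"
  by (rule eq_matI) (auto simp: rho_BC_def rho2_def vBC0_def vBC1_def sum2)

lemma DD_AB: "DD (vAB0 psi) (vAB1 psi) = DD (vBC0 psi) (vBC1 psi)"
  unfolding DD_def
  apply (rule arg_cong[where f=cmod])
  apply (simp add: bil_def vAB0_def vAB1_def vBC0_def vBC1_def)
  apply ((simp only: One_nat_def[symmetric] Suc_1 Suc_numeral add_num_simps)?)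
  apply Groebner_Basis.algebra?
  done
lemma DD_AC: "DD (vAC0 psi) (vAC1 psi) = DD (vBC0 psi) (vBC1 psi)"
  unfolding DD_def
  apply (rule arg_cong[where f=cmod])
  apply (simp add: bil_def vAC0_def vAC1_def vBC0_def vBC1_def)
  apply ((simp only: One_nat_def[symmetric] Suc_1 Suc_numeral add_num_simps)?)
  apply Groebner_Basis.algebra?
  done

lemma Nsum: "(\<Sum>i<8. (cmod (psi $ i))^2) = nrm (vBC0 psi) + nrm (vBC1 psi)"
  by (simp add: nrm_def sum8 sum4 vBC0_def vBC1_def add.assoc)

lemma Nx: "(\<Sum>i<8. (cmod (psi $ i))^2) = (xr psi 0)^2 + (yr psi 0)^2 + (xr psi 1)^2 + (yr psi 1)^2 + (xr psi 2)^2 + (yr psi 2)^2 + (xr psi 3)^2 + (yr psi 3)^2 + (xr psi 4)^2 + (yr psi 4)^2 + (xr psi 5)^2 + (yr psi 5)^2 + (xr psi 6)^2 + (yr psi 6)^2 + (xr psi 7)^2 + (yr psi 7)^2"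
  by (simp add: sum8 cmod_sq xr_def yr_def add.assoc)

lemma e_id: "TT (vAB0 psi) (vAB1 psi) + TT (vAC0 psi) (vAC1 psi) =
   4 * (nrm (vBC0 psi) * nrm (vBC1 psi) - (cmod (ipr (vBC0 psi) (vBC1 psi)))^2)"
  unfolding TT_AB TT_AC nrm_def ipr_def sum4 cmod_sq
  apply (simp add: vBC0_def vBC1_def xr_def yr_def)
  apply ((simp only: One_nat_def[symmetric] Suc_1 Suc_numeral add_num_simps)?)
  apply Groebner_Basis.algebra?
  done

lemma card3: "card {k \<in> {0::nat, 1, 2}. P k} = (if P 0 then 1 else 0) + (if P 1 then 1 else 0) + (if P 2 then (1::nat) else 0)"
proof -
  have "card {k \<in> {0::nat, 1, 2}. P k} = (\<Sum>k\<in>{k \<in> {0::nat, 1, 2}. P k}. (1::nat))" by (rule card_eq_sum)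
  also have "\<dots> = (\<Sum>k\<in>{0::nat, 1, 2}. if P k then 1 else 0)" by (rule sum.inter_filter) simp
  also have "\<dots> = (if P 0 then 1 else 0) + (if P 1 then 1 else 0) + (if P 2 then (1::nat) else 0)" by simp
  finally show ?thesis .
qed
theorem corollary4:
  fixes psi :: "complex vec"
  assumes "pure3 psi"
  and "let CAB = concurrence (rho_AB psi); CAC = concurrence (rho_AC psi);
           CBC = concurrence (rho_BC psi) in
         card {k \<in> {0::nat, 1, 2}.
           (k = 0 \<longrightarrow> CAB^2 + CAC^2 \<ge> 8/9) \<and>
           (k = 1 \<longrightarrow> CAB^2 + CBC^2 \<ge> 8/9) \<and>
           (k = 2 \<longrightarrow> CAC^2 + CBC^2 \<ge> 8/9)} \<ge> 2"
  shows "card {k \<in> {0::nat, 1, 2}.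
           (k = 0 \<longrightarrow> Ssteer (rho_BC psi) > 1) \<and>
           (k = 1 \<longrightarrow> Ssteer (rho_AC psi) > 1) \<and>
           (k = 2 \<longrightarrow> Ssteer (rho_AB psi) > 1)} \<le> 1"
proof -
  define D where "D = DD (vBC0 psi) (vBC1 psi)"
  define TAB where "TAB = TT (vAB0 psi) (vAB1 psi)"
  define TAC where "TAC = TT (vAC0 psi) (vAC1 psi)"
  define TBC where "TBC = TT (vBC0 psi) (vBC1 psi)"
  define x where "x = TAB - 2 * D"
  define y where "y = TAC - 2 * D"
  define z where "z = TBC - 2 * D"
  define nU where "nU = nrm (vBC0 psi)"
  define nV where "nV = nrm (vBC1 psi)"
  define c where "c = cmod (ipr (vBC0 psi) (vBC1 psi))"
  have N1: "(\<Sum>i<8. (cmod (psi $ i))^2) = 1" using assms(1) unfolding pure3_def by simp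
  have cx: "(concurrence (rho_AB psi))^2 = x" unfolding x_def TAB_def D_def rhoAB2 conc_rho2 DD_AB ..
  have cy: "(concurrence (rho_AC psi))^2 = y" unfolding y_def TAC_def D_def rhoAC2 conc_rho2 DD_AC ..
  have cz: "(concurrence (rho_BC psi))^2 = z" unfolding z_def TBC_def D_def rhoBC2 conc_rho2 ..
  have sAB: "Ssteer (rho_AB psi) = 1 + 2 * x - y - z"
  proof -
    have "Ssteer (rho_AB psi) = (\<Sum>i<8. (cmod (psi $ i))^2)^2 + 2 * TAB - TAC - TBC"
      unfolding TAB_def TAC_def TBC_def Nx by (rule S_AB)
    thus ?thesis unfolding N1 x_def y_def z_def by simp
  qed
  have sAC: "Ssteer (rho_AC psi) = 1 + 2 * y - x - z"
  proof -
    have "Ssteer (rho_AC psi) = (\<Sum>i<8. (cmod (psi $ i))^2)^2 + 2 * TAC - TAB - TBC"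
      unfolding TAB_def TAC_def TBC_def Nx by (rule S_AC)
    thus ?thesis unfolding N1 x_def y_def z_def by simp
  qed
  have sBC: "Ssteer (rho_BC psi) = 1 + 2 * z - x - y"
  proof -
    have "Ssteer (rho_BC psi) = (\<Sum>i<8. (cmod (psi $ i))^2)^2 + 2 * TBC - TAB - TAC"
      unfolding TAB_def TAC_def TBC_def Nx by (rule S_BC)
    thus ?thesis unfolding N1 x_def y_def z_def by simp
  qed
  have bound: "x + y + z \<le> 4/3"
  proof -
    define e where "e = nU * nV - c^2"
    define s where "s = sqrt ((nU - nV)^2 + 4 * c^2)"
    have n1: "nU + nV = 1" using N1 unfolding Nsum nU_def nV_def .
    have D0: "D \<ge> 0" unfolding D_def by (rule DD_ge0)
    have xy: "x + y \<le> 4 * e"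
      using e_id[of psi] D0 unfolding x_def y_def TAB_def TAC_def e_def nU_def nV_def c_def by simp
    have zm: "z \<le> (mmax (vBC0 psi) (vBC1 psi))^2"
      using main_ineq[of "vBC0 psi" "vBC1 psi"] unfolding z_def TBC_def D_def .
    have m: "mmax (vBC0 psi) (vBC1 psi) = (1 + s) / 2"
      unfolding mmax_def s_def nU_def[symmetric] nV_def[symmetric] c_def[symmetric] n1 ..
    have arg: "(nU - nV)^2 + 4 * c^2 = 1 - 4 * e"
    proof -
      have "(nU - nV)^2 + 4 * c^2 = (nU + nV)^2 - 4 * e" unfolding e_def by (simp add: algebra_simps power2_eq_square)
      thus ?thesis unfolding n1 by simp
    qed
    have s2: "s^2 = 1 - 4 * e" unfolding s_def arg[symmetric] by simp
    have "x + y + z \<le> 4 * e + ((1 + s) / 2)^2" using xy zm unfolding m by simp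
    also have "\<dots> = 4/3 - (3 * s - 1)^2 / 12" using s2 by (simp add: field_simps power2_eq_square)
    also have "\<dots> \<le> 4/3" by simp
    finally show ?thesis .
  qed
  have H: "(if x + y \<ge> 8/9 then 1 else 0) + (if x + z \<ge> 8/9 then 1 else 0) + (if y + z \<ge> 8/9 then 1 else 0) \<ge> (2::nat)"
    using assms(2) unfolding Let_def card3 cx cy cz by simp
  show ?thesis unfolding card3 sAB sAC sBC using H bound by (auto split: if_splits)
qed

end
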